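(* Let $K$ be a virtual knot diagram and $n\geq 0$. Then $|C_n(K)|\geq \operatorname{span}V_K^n(t)$, where $\operatorname{span}$ denotes the difference between the highest and lowest exponents of $t$ occurring in the Laurent polynomial (in $t^{1/2}$) $V_K^n(t)$.
   Context: Virtual knot diagrams, real crossings with writhe $w(c)\in\{\pm1\}$, $w(K)=\sum_c w(c)$. Chord index: in the Gauss diagram (counterclockwise circle, one chord per real crossing directed from over- to under-preimage and signed by the writhe), for a chord $c$ let $r_\pm(c)$ (resp. $l_\pm(c)$) be the number of chords of sign $\pm$ whose endpoints interlace with those of $c$ and whose tail lies to the left (resp. right) of the arrow $c$ and head to the right (resp. left); $\mathrm{Ind}(c)=r_+(c)-r_-(c)-l_+(c)+l_-(c)$. For $n\geq 0$ let $C_n(K)=\{c \text{ real crossing}: \mathrm{Ind}(c)=kn \text{ for some } k\in\mathbb{Z}\}$. A state $S$ is obtained by smoothing every crossing of $C_n(K)$ by either the $0$-smoothing ($A$-smoothing of the Kauffman bracket) or the $1$-smoothing ($B$-smoothing), leaving all other crossings unchanged; $S$ is a virtual link diagram with $|S|$ components, and $\#_0,\#_1$ count the $0$- and $1$-smoothings used. $\langle K\rangle_n=\sum_S A^{\#_0-\#_1}(-A^2-A^{-2})^{|S|-1}$ and $V_K^n(t)=(-A^3)^{-w(K)}\langle K\rangle_n\big|_{A=t^{-1/4}}$. *)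

theory Defs
  imports Complex_Main "HOL-Library.FuncSet"
    "HOL-Computational_Algebra.Formal_Laurent_Series"
begin

(* A virtual knot diagram is encoded by its (signed, oriented) Gauss diagram.
   The knot is traversed in the counterclockwise direction of the Gauss circle;
   the 2m crossing preimages are the positions 0,...,2m-1 in order of traversal.
   Crossing c < m has over-preimage (tail of chord) ovr c, under-preimage
   (head of chord) und c, and writhe wr c. *)
record gauss =
  ncr :: nat
  ovr :: "nat \<Rightarrow> nat"
  und :: "nat \<Rightarrow> nat"
  wr  :: "nat \<Rightarrow> int"

definition npts :: "gauss \<Rightarrow> nat" where
  "npts G = 2 * ncr G"

definition crossings :: "gauss \<Rightarrow> nat set" where
  "crossings G = {..<ncr G}"

definition gauss_diagram :: "gauss \<Rightarrow> bool" where
  "gauss_diagram G \<longleftrightarrow>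
     (\<forall>c\<in>crossings G. ovr G c < npts G \<and> und G c < npts G \<and> wr G c \<in> {1, -1}) \<and>
     inj_on (\<lambda>(c, b). if b then ovr G c else und G c) (crossings G \<times> (UNIV :: bool set))"

definition cdist :: "gauss \<Rightarrow> nat \<Rightarrow> nat \<Rightarrow> int" where
  "cdist G a x = (int x - int a) mod int (npts G)"

definition right_of :: "gauss \<Rightarrow> nat \<Rightarrow> nat \<Rightarrow> bool" where
  "right_of G c x \<longleftrightarrow> 0 < cdist G (ovr G c) x \<and> cdist G (ovr G c) x < cdist G (ovr G c) (und G c)"

definition left_of :: "gauss \<Rightarrow> nat \<Rightarrow> nat \<Rightarrow> bool" where
  "left_of G c x \<longleftrightarrow> cdist G (ovr G c) (und G c) < cdist G (ovr G c) x"

definition chord_index :: "gauss \<Rightarrow> nat \<Rightarrow> int" where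
  "chord_index G c =
     (\<Sum>d\<in>crossings G - {c}.
        wr G d * ((if left_of G c (ovr G d) \<and> right_of G c (und G d) then 1 else 0)
                - (if right_of G c (ovr G d) \<and> left_of G c (und G d) then 1 else 0)))"

definition Cn :: "gauss \<Rightarrow> nat \<Rightarrow> nat set" where
  "Cn G n = {c \<in> crossings G. \<exists>k::int. chord_index G c = k * int n}"

definition writhe :: "gauss \<Rightarrow> int" where
  "writhe G = (\<Sum>c\<in>crossings G. wr G c)"

(* segments (arcs of the curve between consecutive crossing preimages):
   segment i runs from position i to position i+1 mod 2m *)
definition seg_in :: "gauss \<Rightarrow> nat \<Rightarrow> nat" where
  "seg_in G p = (p + npts G - 1) mod npts G"   (* segment ending at p *)

(* A state s assigns to each crossing of C a smoothing, 0 (A) or 1 (B).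
   For a positive crossing the 0-smoothing is the oriented (Seifert) one,
   for a negative crossing the 1-smoothing is the oriented one. *)
definition oriented_smoothing :: "gauss \<Rightarrow> (nat \<Rightarrow> nat) \<Rightarrow> nat \<Rightarrow> bool" where
  "oriented_smoothing G s c \<longleftrightarrow> (wr G c = 1 \<longleftrightarrow> s c = 0)"

definition glued :: "gauss \<Rightarrow> nat set \<Rightarrow> (nat \<Rightarrow> nat) \<Rightarrow> nat \<Rightarrow> nat \<Rightarrow> bool" where
  "glued G C s i j \<longleftrightarrow> (\<exists>c\<in>crossings G.
     (let ip = seg_in G (ovr G c); op = ovr G c; iq = seg_in G (und G c); oq = und G c in
      if c \<notin> C then (i, j) \<in> {(ip, op), (iq, oq)}
      else if oriented_smoothing G s c then (i, j) \<in> {(ip, oq), (iq, op)}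
      else (i, j) \<in> {(ip, iq), (op, oq)}))"

definition same_component :: "gauss \<Rightarrow> nat set \<Rightarrow> (nat \<Rightarrow> nat) \<Rightarrow> nat \<Rightarrow> nat \<Rightarrow> bool" where
  "same_component G C s = (\<lambda>i j. glued G C s i j \<or> glued G C s j i)\<^sup>*\<^sup>*"

definition ncomp :: "gauss \<Rightarrow> nat set \<Rightarrow> (nat \<Rightarrow> nat) \<Rightarrow> nat" where
  "ncomp G C s = (if ncr G = 0 then 1
     else card ({..<npts G} // {(i, j). same_component G C s i j}))"

definition bracket_n :: "gauss \<Rightarrow> nat \<Rightarrow> int fls" where
  "bracket_n G n = (\<Sum>s \<in> Cn G n \<rightarrow>\<^sub>E {0, 1}.
      fls_X_intpow (int (card {c \<in> Cn G n. s c = 0}) - int (card {c \<in> Cn G n. s c = 1}))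
      * (- (fls_X ^ 2) - fls_X_inv ^ 2) ^ (ncomp G (Cn G n) s - 1))"

definition jones_n_A :: "gauss \<Rightarrow> nat \<Rightarrow> int fls" where
  "jones_n_A G n = (-1) ^ nat \<bar>writhe G\<bar> * fls_X_intpow (-3 * writhe G) * bracket_n G n"

(* exponents of t occurring in V_K^n(t), obtained by substituting A = t^(-1/4) *)
definition t_exponents :: "int fls \<Rightarrow> real set" where
  "t_exponents f = {- real_of_int e / 4 | e. fls_nth f e \<noteq> 0}"

definition t_span :: "int fls \<Rightarrow> real" where
  "t_span f = (if f = 0 then 0 else Max (t_exponents f) - Min (t_exponents f))"

end

theory Submission
  imports Defs
begin


lemma quot_map_card:
  assumes eX: "equiv X rX" and eY: "equiv Y rY" and img: "h ` X = Y"
    and compat: "\<And>a b. a \<in> X \<Longrightarrow> b \<in> X \<Longrightarrow> (a, b) \<in> rX \<longleftrightarrow> (h a, h b) \<in> rY"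
  shows "card (X // rX) = card (Y // rY)"
proof -
  have cls: "h ` (rX `` {a}) = rY `` {h a}" if "a \<in> X" for a
  proof
    show "h ` (rX `` {a}) \<subseteq> rY `` {h a}"
    proof
      fix w assume "w \<in> h ` (rX `` {a})"
      then obtain b where b: "(a,b) \<in> rX" "w = h b" by auto
      then have "b \<in> X" using eX by (auto dest: equiv_type)
      with b that compat show "w \<in> rY `` {h a}" by auto
    qed
    show "rY `` {h a} \<subseteq> h ` (rX `` {a})"
    proof
      fix w assume w: "w \<in> rY `` {h a}"
      then have "w \<in> Y" using eY by (auto dest: equiv_type)
      then obtain b where "b \<in> X" "w = h b" using img by auto
      with w that compat show "w \<in> h ` (rX `` {a})" by auto
    qed
  qed
  have "bij_betw (\<lambda>C. h ` C) (X // rX) (Y // rY)"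
  proof (rule bij_betw_imageI)
    show "inj_on ((`) h) (X // rX)"
    proof (rule inj_onI)
      fix C D assume C: "C \<in> X // rX" and D: "D \<in> X // rX" and eq: "h ` C = h ` D"
      from C obtain a where a: "a \<in> X" "C = rX `` {a}" by (auto elim: quotientE)
      from D obtain b where b: "b \<in> X" "D = rX `` {b}" by (auto elim: quotientE)
      have "rY `` {h a} = rY `` {h b}" using eq a b cls by simp
      then have "(h a, h b) \<in> rY" using eY a b img
        by (meson eq_equiv_class image_eqI)
      then have "(a, b) \<in> rX" using compat a b by simp
      then show "C = D" using a b eX by (simp add: equiv_class_eq)
    qed
    show "(`) h ` (X // rX) = Y // rY"
    proof
      show "(`) h ` (X // rX) \<subseteq> Y // rY"
        using cls img by (auto elim!: quotientE intro!: quotientI)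
      show "Y // rY \<subseteq> (`) h ` (X // rX)"
      proof
        fix E assume "E \<in> Y // rY"
        then obtain y where y: "y \<in> Y" "E = rY `` {y}" by (auto elim: quotientE)
        then obtain a where "a \<in> X" "y = h a" using img by auto
        then show "E \<in> (`) h ` (X // rX)" using cls y by (auto intro: quotientI)
      qed
    qed
  qed
  then show ?thesis by (rule bij_betw_same_card)
qed

lemma quot_restrict_card:
  assumes eX: "equiv X r" and sub: "X' \<subseteq> X"
    and meet: "\<And>u. u \<in> X \<Longrightarrow> \<exists>v\<in>X'. (u, v) \<in> r"
    and e': "equiv X' r'"
    and same: "\<And>a b. a \<in> X' \<Longrightarrow> b \<in> X' \<Longrightarrow> (a, b) \<in> r' \<longleftrightarrow> (a, b) \<in> r"
  shows "card (X' // r') = card (X // r)"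
proof -
  define h where "h u = (if u \<in> X' then u else (SOME v. v \<in> X' \<and> (u, v) \<in> r))" for u
  have h: "h u \<in> X' \<and> (u, h u) \<in> r" if "u \<in> X" for u
  proof (cases "u \<in> X'")
    case True then show ?thesis using eX that by (simp add: h_def equiv_def refl_on_def)
  next
    case False
    from meet[OF that] have "\<exists>v. v \<in> X' \<and> (u, v) \<in> r" by auto
    from someI_ex[OF this] False show ?thesis by (simp add: h_def)
  qed
  have img: "h ` X = X'"
  proof
    show "h ` X \<subseteq> X'" using h by auto
    show "X' \<subseteq> h ` X" using sub by (force simp: h_def)
  qed
  have "card (X // r) = card (X' // r')"
  proof (rule quot_map_card[OF eX e' img])
    fix a b assume a: "a \<in> X" and b: "b \<in> X"
    have "(a, b) \<in> r \<longleftrightarrow> (h a, h b) \<in> r"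
      using h[OF a] h[OF b] eX unfolding equiv_def by (meson symD transD)
    also have "\<dots> \<longleftrightarrow> (h a, h b) \<in> r'" using same h a b by auto
    finally show "(a, b) \<in> r \<longleftrightarrow> (h a, h b) \<in> r'" .
  qed
  then show ?thesis by simp
qed

lemma equiv_restrict: "equiv X r \<Longrightarrow> Z \<subseteq> X \<Longrightarrow> equiv Z (r \<inter> Z \<times> Z)"
  unfolding equiv_def refl_on_def sym_def trans_def by blast

lemma quot_merge_card:
  assumes fin: "finite X" and eX: "equiv X r" and e': "equiv X r'"
    and u0: "u0 \<in> X" and v0: "v0 \<in> X" and nr: "(u0, v0) \<notin> r"
    and char: "\<And>a b. a \<in> X \<Longrightarrow> b \<in> X \<Longrightarrow> (a, b) \<in> r' \<longleftrightarrow>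
        (a, b) \<in> r \<or> (((a, u0) \<in> r \<or> (a, v0) \<in> r) \<and> ((b, u0) \<in> r \<or> (b, v0) \<in> r))"
  shows "card (X // r) = card (X // r') + 1"
proof -
  define Cv where "Cv = r `` {v0}"
  define Z where "Z = X - Cv"
  have ZX: "Z \<subseteq> X" by (auto simp: Z_def)
  have eZ: "equiv Z (r \<inter> Z \<times> Z)" by (rule equiv_restrict[OF eX ZX])
  have u0Z: "u0 \<in> Z" using nr u0 eX unfolding Z_def Cv_def equiv_def sym_def by blast
  have c1: "card (Z // (r \<inter> Z \<times> Z)) = card (X // r')"
  proof (rule quot_restrict_card[OF e' ZX _ eZ])
    fix u assume u: "u \<in> X"
    show "\<exists>v\<in>Z. (u, v) \<in> r'"
    proof (cases "u \<in> Z")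
      case True then show ?thesis using e' u by (auto simp: equiv_def refl_on_def)
    next
      case False
      then have "(v0, u) \<in> r" using u by (auto simp: Z_def Cv_def)
      then have "(u, v0) \<in> r" using eX by (auto simp: equiv_def sym_def)
      then have "(u, u0) \<in> r'" using char[OF u u0] eX u0 by (auto simp: equiv_def refl_on_def)
      then show ?thesis using u0Z by blast
    qed
  next
    fix a b assume a: "a \<in> Z" and b: "b \<in> Z"
    then have na: "(a, v0) \<notin> r" "(b, v0) \<notin> r" using eX
      by (auto simp: Z_def Cv_def equiv_def sym_def)
    have "(a, b) \<in> r'  \<longleftrightarrow> (a, b) \<in> r" using char a b ZX na eX
      unfolding equiv_def sym_def trans_def by blast
    then show "(a, b) \<in> r \<inter> Z \<times> Z \<longleftrightarrow> (a, b) \<in> r'" using a b by auto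
  qed
  have clsZ: "(r \<inter> Z \<times> Z) `` {z} = r `` {z}" if "z \<in> Z" for z
  proof -
    have "r `` {z} \<subseteq> Z"
    proof
      fix w assume w: "w \<in> r `` {z}"
      then have "w \<in> X" using eX by (auto dest: equiv_type)
      moreover have "w \<notin> Cv"
      proof
        assume "w \<in> Cv"
        then have "(v0, w) \<in> r" by (simp add: Cv_def)
        with w eX have "(v0, z) \<in> r" unfolding equiv_def sym_def trans_def by blast
        with that show False by (simp add: Z_def Cv_def)
      qed
      ultimately show "w \<in> Z" by (simp add: Z_def)
    qed
    then show ?thesis using that by auto
  qed
  have qZ: "Z // (r \<inter> Z \<times> Z) = X // r - {Cv}"
  proof
    show "Z // (r \<inter> Z \<times> Z) \<subseteq> X // r - {Cv}"
    proof
      fix C assume "C \<in> Z // (r \<inter> Z \<times> Z)"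
      then obtain z where z: "z \<in> Z" "C = (r \<inter> Z \<times> Z) `` {z}" by (auto elim: quotientE)
      then have C: "C = r `` {z}" using clsZ by simp
      have "z \<in> C" using C z ZX eX by (metis equiv_class_self subsetD)
      moreover have "z \<notin> Cv" using z by (simp add: Z_def)
      ultimately have "C \<noteq> Cv" by auto
      then show "C \<in> X // r - {Cv}" using C z ZX by (auto intro: quotientI)
    qed
    show "X // r - {Cv} \<subseteq> Z // (r \<inter> Z \<times> Z)"
    proof
      fix C assume C: "C \<in> X // r - {Cv}"
      then obtain z where z: "z \<in> X" "C = r `` {z}" by (auto elim: quotientE)
      have "z \<notin> Cv"
      proof
        assume "z \<in> Cv"
        then have "(v0, z) \<in> r" by (simp add: Cv_def)
        then have "r `` {v0} = r `` {z}" using eX by (rule equiv_class_eq[rotated])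
        then show False using C z by (simp add: Cv_def)
      qed
      then have "z \<in> Z" using z by (simp add: Z_def)
      then show "C \<in> Z // (r \<inter> Z \<times> Z)" using clsZ z by (metis quotientI)
    qed
  qed
  have CvX: "Cv \<in> X // r" using v0 by (simp add: Cv_def quotientI)
  have "finite (X // r)" using fin eX by (simp add: finite_quotient equiv_type)
  then have "card (X // r) = card (X // r - {Cv}) + 1"
    using CvX by (metis card_Diff1_less card_Diff_singleton Suc_eq_plus1 Suc_pred' gr_implies_not0 not_gr0)
  then show ?thesis using qZ c1 by simp
qed


definition rel :: "'a set \<Rightarrow> ('a \<Rightarrow> 'a \<Rightarrow> bool) \<Rightarrow> ('a \<times> 'a) set" where
  "rel X E = {(u, v). u \<in> X \<and> v \<in> X \<and> E\<^sup>*\<^sup>* u v}"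

definition nc :: "'a set \<Rightarrow> ('a \<Rightarrow> 'a \<Rightarrow> bool) \<Rightarrow> nat" where
  "nc X E = card (X // rel X E)"

definition invol :: "'a set \<Rightarrow> ('a \<Rightarrow> 'a) \<Rightarrow> bool" where
  "invol X f \<longleftrightarrow> (\<forall>x\<in>X. f x \<in> X \<and> f x \<noteq> x \<and> f (f x) = x)"

definition E2 :: "'a set \<Rightarrow> ('a \<Rightarrow> 'a) \<Rightarrow> ('a \<Rightarrow> 'a) \<Rightarrow> 'a \<Rightarrow> 'a \<Rightarrow> bool" where
  "E2 X f g u v \<longleftrightarrow> u \<in> X \<and> v \<in> X \<and> (v = f u \<or> v = g u)"

definition E3 :: "'a set \<Rightarrow> ('a \<Rightarrow> 'a) \<Rightarrow> ('a \<Rightarrow> 'a) \<Rightarrow> ('a \<Rightarrow> 'a) \<Rightarrow> 'a \<Rightarrow> 'a \<Rightarrow> bool" where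
  "E3 X f g h u v \<longleftrightarrow> u \<in> X \<and> v \<in> X \<and> (v = f u \<or> v = g u \<or> v = h u)"

lemma rtranclp_sym: "symp E \<Longrightarrow> E\<^sup>*\<^sup>* u v \<Longrightarrow> E\<^sup>*\<^sup>* v u"
  by (metis symp_rtranclp symp_def)

lemma equiv_rel: "symp E \<Longrightarrow> equiv X (rel X E)"
  unfolding rel_def equiv_def refl_on_def sym_def trans_def
  by (auto intro: rtranclp_sym rtranclp_trans)

lemma E2_sym: "invol X f \<Longrightarrow> invol X g \<Longrightarrow> symp (E2 X f g)"
  unfolding symp_def E2_def invol_def by auto

lemma E3_sym: "invol X f \<Longrightarrow> invol X g \<Longrightarrow> invol X h \<Longrightarrow> symp (E3 X f g h)"
  unfolding symp_def E3_def invol_def by auto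

lemma E2_comm: "E2 X f g = E2 X g f"
  unfolding E2_def by (intro ext) auto

lemma E3_perm: "E3 X f g h = E3 X g f h" "E3 X f g h = E3 X f h g"
  unfolding E3_def by (intro ext, auto)+

lemma E2_E3: "E2 X f g u v \<Longrightarrow> E3 X h f g u v"
  unfolding E2_def E3_def by auto

lemma even_invol_card:
  assumes "finite S" and "\<And>u. u \<in> S \<Longrightarrow> f u \<in> S \<and> f u \<noteq> u \<and> f (f u) = u"
  shows "even (card S)"
  using assms
proof (induction "card S" arbitrary: S rule: less_induct)
  case less
  show ?case
  proof (cases "S = {}")
    case True then show ?thesis by simp
  next
    case False
    then obtain u where u: "u \<in> S" by auto
    let ?T = "S - {u, f u}"
    have fu: "f u \<in> S" "f u \<noteq> u" using less.prems(2)[OF u] by auto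
    have c2: "card {u, f u} = 2" using fu by simp
    have "{u, f u} \<subseteq> S" using u fu by auto
    then have cT: "card ?T + 2 = card S" using c2 less.prems(1)
      by (metis card_Diff_subset card_mono finite_subset le_add_diff_inverse2)
    have "even (card ?T)"
    proof (rule less.hyps)
      show "card ?T < card S" using cT by simp
      show "finite ?T" using less.prems(1) by simp
      fix w assume w: "w \<in> ?T"
      have "f w \<in> S" "f w \<noteq> w" "f (f w) = w" using less.prems(2) w by auto
      moreover have "f w \<noteq> u" using w less.prems(2)[OF u] \<open>f (f w) = w\<close> by auto
      moreover have "f w \<noteq> f u"
      proof
        assume "f w = f u"
        then have "f (f w) = f (f u)" by simp
        then show False using w less.prems(2)[OF u] \<open>f (f w) = w\<close> by auto
      qed
      ultimately show "f w \<in> ?T \<and> f w \<noteq> w \<and> f (f w) = w" by auto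
    qed
    then show ?thesis using cT by (metis even_add even_numeral)
  qed
qed


lemma gpl:
  assumes symE: "symp E" and symE': "symp E'"
    and H1: "\<And>u v. u \<in> X' \<Longrightarrow> v \<in> X' \<Longrightarrow> E u v \<Longrightarrow> E' u v"
    and H2: "\<And>u v. E' u v \<Longrightarrow> E\<^sup>*\<^sup>* u v \<or> ((E\<^sup>*\<^sup>* u x \<or> E\<^sup>*\<^sup>* u y) \<and> (E\<^sup>*\<^sup>* v x \<or> E\<^sup>*\<^sup>* v y))"
    and H3: "\<And>w. w \<in> X' \<Longrightarrow> E x w \<or> E y w \<Longrightarrow> E'\<^sup>*\<^sup>* w z"
    and Xc: "\<And>u v. E u v \<Longrightarrow> u \<in> X' \<or> u \<in> {x, y}"
    and Xc2: "\<And>u v. E u v \<Longrightarrow> v \<in> X' \<or> v \<in> {x, y}"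
    and u: "u \<in> X'" and v: "v \<in> X'" and nx: "x \<notin> X'" and ny: "y \<notin> X'"
  shows "E'\<^sup>*\<^sup>* u v \<longleftrightarrow> E\<^sup>*\<^sup>* u v \<or> ((E\<^sup>*\<^sup>* u x \<or> E\<^sup>*\<^sup>* u y) \<and> (E\<^sup>*\<^sup>* v x \<or> E\<^sup>*\<^sup>* v y))"
proof
  assume "E'\<^sup>*\<^sup>* u v"
  then show "E\<^sup>*\<^sup>* u v \<or> ((E\<^sup>*\<^sup>* u x \<or> E\<^sup>*\<^sup>* u y) \<and> (E\<^sup>*\<^sup>* v x \<or> E\<^sup>*\<^sup>* v y))"
  proof (induction rule: rtranclp_induct)
    case base then show ?case by simp
  next
    case (step w w')
    have s: "\<And>a b. E\<^sup>*\<^sup>* a b \<Longrightarrow> E\<^sup>*\<^sup>* b a" using rtranclp_sym[OF symE] by blast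
    from H2[OF step.hyps(2)] step.IH show ?case
      by (meson rtranclp_trans s)
  qed
next
  have L: "(w \<in> X' \<longrightarrow> E'\<^sup>*\<^sup>* a w) \<and> (w \<in> {x, y} \<longrightarrow> E'\<^sup>*\<^sup>* a z)"
    if "E\<^sup>*\<^sup>* a w" "a \<in> X'" for a w
    using that(1)
  proof (induction rule: rtranclp_induct)
    case base then show ?case using that(2) nx ny by auto
  next
    case (step w w')
    have s': "\<And>a b. E'\<^sup>*\<^sup>* a b \<Longrightarrow> E'\<^sup>*\<^sup>* b a" using rtranclp_sym[OF symE'] by blast
    have ww: "E w' w" using step.hyps(2) symE by (simp add: symp_def)
    show ?case
    proof (cases "w \<in> X'")
      case True
      then have aw: "E'\<^sup>*\<^sup>* a w" using step.IH by simp
      show ?thesis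
      proof (cases "w' \<in> X'")
        case True
        have "E' w w'" using H1[OF \<open>w \<in> X'\<close> True step.hyps(2)] .
        then have "E'\<^sup>*\<^sup>* a w'" using aw by (rule rtranclp.rtrancl_into_rtrancl[rotated])
        then show ?thesis using True nx ny by auto
      next
        case False
        then have "w' \<in> {x, y}" using Xc2[OF step.hyps(2)] by auto
        then have "E x w \<or> E y w" using ww by auto
        then have "E'\<^sup>*\<^sup>* w z" using H3 \<open>w \<in> X'\<close> by blast
        then have "E'\<^sup>*\<^sup>* a z" using aw by (rule rtranclp_trans[rotated])
        then show ?thesis using False by simp
      qed
    next
      case False
      then have wxy: "w \<in> {x, y}" using Xc[OF step.hyps(2)] by auto
      then have az: "E'\<^sup>*\<^sup>* a z" using step.IH by simp
      show ?thesis
      proof (cases "w' \<in> X'")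
        case True
        then have "E'\<^sup>*\<^sup>* w' z" using H3 wxy step.hyps(2) by blast
        then have "E'\<^sup>*\<^sup>* z w'" by (rule s')
        then have "E'\<^sup>*\<^sup>* a w'" using az by (rule rtranclp_trans[rotated])
        then show ?thesis using True nx ny by auto
      next
        case False then show ?thesis using az by simp
      qed
    qed
  qed
  assume "E\<^sup>*\<^sup>* u v \<or> ((E\<^sup>*\<^sup>* u x \<or> E\<^sup>*\<^sup>* u y) \<and> (E\<^sup>*\<^sup>* v x \<or> E\<^sup>*\<^sup>* v y))"
  then show "E'\<^sup>*\<^sup>* u v"
  proof
    assume "E\<^sup>*\<^sup>* u v" then show ?thesis using L u v by blast
  next
    assume h: "(E\<^sup>*\<^sup>* u x \<or> E\<^sup>*\<^sup>* u y) \<and> (E\<^sup>*\<^sup>* v x \<or> E\<^sup>*\<^sup>* v y)"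
    then have "E'\<^sup>*\<^sup>* u z" "E'\<^sup>*\<^sup>* v z" using L u v by blast+
    then show ?thesis using rtranclp_sym[OF symE', of v z] rtranclp_trans[of E' u z v] by blast
  qed
qed

lemma nc_shortcut:
  assumes symE: "symp E" and symE': "symp E'" and XX: "X' \<subseteq> X"
    and char: "\<And>u v. u \<in> X' \<Longrightarrow> v \<in> X' \<Longrightarrow> E'\<^sup>*\<^sup>* u v \<longleftrightarrow> E\<^sup>*\<^sup>* u v"
    and meet: "\<And>u. u \<in> X \<Longrightarrow> \<exists>v\<in>X'. E\<^sup>*\<^sup>* u v"
  shows "nc X' E' = nc X E"
  unfolding nc_def
proof (rule quot_restrict_card[OF equiv_rel[OF symE] XX _ equiv_rel[OF symE']])
  fix u assume "u \<in> X" then show "\<exists>v\<in>X'. (u, v) \<in> rel X E" using meet XX by (force simp: rel_def)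
next
  fix a b assume "a \<in> X'" "b \<in> X'" then show "(a, b) \<in> rel X' E' \<longleftrightarrow> (a, b) \<in> rel X E"
    using char XX by (auto simp: rel_def)
qed

lemma nc_merge:
  assumes fin: "finite X" and symE: "symp E" and symE': "symp E'" and XX: "X' \<subseteq> X"
    and x: "x \<in> X" and y: "y \<in> X" and nxy: "\<not> E\<^sup>*\<^sup>* x y"
    and char: "\<And>u v. u \<in> X' \<Longrightarrow> v \<in> X' \<Longrightarrow> E'\<^sup>*\<^sup>* u v \<longleftrightarrow>
        E\<^sup>*\<^sup>* u v \<or> ((E\<^sup>*\<^sup>* u x \<or> E\<^sup>*\<^sup>* u y) \<and> (E\<^sup>*\<^sup>* v x \<or> E\<^sup>*\<^sup>* v y))"
    and meet: "\<And>u. u \<in> X \<Longrightarrow> \<exists>v\<in>X'. E\<^sup>*\<^sup>* u v"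
  shows "nc X E = nc X' E' + 1"
proof -
  have s: "\<And>a b. E\<^sup>*\<^sup>* a b \<Longrightarrow> E\<^sup>*\<^sup>* b a" using rtranclp_sym[OF symE] by blast
  have t: "\<And>a b c. E\<^sup>*\<^sup>* a b \<Longrightarrow> E\<^sup>*\<^sup>* b c \<Longrightarrow> E\<^sup>*\<^sup>* a c" by (rule rtranclp_trans)
  define R where "R = {(a, b). a \<in> X \<and> b \<in> X \<and>
        (E\<^sup>*\<^sup>* a b \<or> ((E\<^sup>*\<^sup>* a x \<or> E\<^sup>*\<^sup>* a y) \<and> (E\<^sup>*\<^sup>* b x \<or> E\<^sup>*\<^sup>* b y)))}"
  have eR: "equiv X R"
    unfolding equiv_def refl_on_def sym_def trans_def R_def
    using s t by blast
  have c1: "card (X // rel X E) = card (X // R) + 1"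
  proof (rule quot_merge_card[OF fin equiv_rel[OF symE] eR x y])
    show "(x, y) \<notin> rel X E" using nxy by (simp add: rel_def)
    fix a b assume "a \<in> X" "b \<in> X"
    then show "(a, b) \<in> R \<longleftrightarrow> (a, b) \<in> rel X E \<or>
      (((a, x) \<in> rel X E \<or> (a, y) \<in> rel X E) \<and> ((b, x) \<in> rel X E \<or> (b, y) \<in> rel X E))"
      using x y by (auto simp: R_def rel_def)
  qed
  have c2: "card (X' // rel X' E') = card (X // R)"
  proof (rule quot_restrict_card[OF eR XX _ equiv_rel[OF symE']])
    fix u assume "u \<in> X" then show "\<exists>v\<in>X'. (u, v) \<in> R" using meet XX by (force simp: R_def)
  next
    fix a b assume "a \<in> X'" "b \<in> X'" then show "(a, b) \<in> rel X' E' \<longleftrightarrow> (a, b) \<in> R"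
      using char XX by (auto simp: rel_def R_def)
  qed
  show ?thesis using c1 c2 by (simp add: nc_def)
qed


lemma involD: "invol X f \<Longrightarrow> x \<in> X \<Longrightarrow> f x \<in> X \<and> f x \<noteq> x \<and> f (f x) = x"
  by (simp add: invol_def)

lemma invol_eq: "invol X f \<Longrightarrow> u \<in> X \<Longrightarrow> v \<in> X \<Longrightarrow> f u = v \<longleftrightarrow> u = f v"
  unfolding invol_def by metis

lemma invol_inj: "invol X f \<Longrightarrow> u \<in> X \<Longrightarrow> v \<in> X \<Longrightarrow> f u = f v \<longleftrightarrow> u = v"
  unfolding invol_def by metis

lemma invol_swap:
  assumes f: "invol X f" and x: "x \<in> X" and y: "y \<in> X" and xy: "x \<noteq> y" and fxy: "f x \<noteq> y"
  shows "invol (X - {x, y}) (f(f x := f y, f y := f x))"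
proof -
  note fx = involD[OF f x] and fy = involD[OF f y]
  have fyx: "f y \<noteq> x"
  proof
    assume "f y = x" then have "f (f y) = f x" by simp
    then show False using fy fxy by simp
  qed
  have ne: "f x \<noteq> f y" using fx fy xy by metis
  show ?thesis unfolding invol_def
  proof
    fix u assume u: "u \<in> X - {x, y}"
    note fu = involD[OF f, of u]
    show "(f(f x := f y, f y := f x)) u \<in> X - {x, y} \<and> (f(f x := f y, f y := f x)) u \<noteq> u \<and>
          (f(f x := f y, f y := f x)) ((f(f x := f y, f y := f x)) u) = u"
    proof (cases "u = f x")
      case True then show ?thesis using fx fy fyx fxy ne u by auto
    next
      case False
      show ?thesis
      proof (cases "u = f y")
        case True then show ?thesis using fx fy fyx fxy ne u by auto
      next
        case False2: False
        have uX: "u \<in> X" using u by simp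
        have "f u \<noteq> x" using False invol_eq[OF f uX x] by simp
        moreover have "f u \<noteq> y" using False2 invol_eq[OF f uX y] by simp
        moreover have "f u \<noteq> f x" using u invol_inj[OF f uX x] by auto
        moreover have "f u \<noteq> f y" using u invol_inj[OF f uX y] by auto
        ultimately show ?thesis using False False2 u fu by auto
      qed
    qed
  qed
qed

lemma red_pair:
  assumes fin: "finite X" and a: "invol X a" and b: "invol X b" and x: "x \<in> X"
    and bxy: "b x \<noteq> a x"
  shows "nc (X - {x, a x}) (E2 (X - {x, a x}) a (b(b x := b (a x), b (a x) := b x))) = nc X (E2 X a b)"
proof -
  define y where "y = a x"
  define X' where "X' = X - {x, y}"
  define b' where "b' = b(b x := b y, b y := b x)"
  note ax = involD[OF a x]
  have y: "y \<in> X" "y \<noteq> x" "a y = x" using ax by (auto simp: y_def)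
  note bx = involD[OF b x] and by' = involD[OF b y(1)]
  have bxy': "b x \<noteq> y" using bxy by (simp add: y_def)
  have byx: "b y \<noteq> x"
  proof
    assume "b y = x" then have "b (b y) = b x" by simp
    then show False using by' bxy' by simp
  qed
  have ne: "b x \<noteq> b y" using bx by' y by metis
  have ia: "invol X' a" unfolding invol_def X'_def
  proof
    fix u assume u: "u \<in> X - {x, y}"
    note au = involD[OF a, of u]
    have uX: "u \<in> X" using u by simp
    have "a u \<noteq> x" using u invol_eq[OF a uX x] y_def by auto
    moreover have "a u \<noteq> y" using u invol_eq[OF a uX y(1)] y by auto
    ultimately show "a u \<in> X - {x, y} \<and> a u \<noteq> u \<and> a (a u) = u" using u au by auto
  qed
  have ib: "invol X' b'" unfolding X'_def b'_def
    by (rule invol_swap[OF b x y(1)]) (use y bxy' in auto)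
  let ?E = "E2 X a b" and ?E' = "E2 X' a b'"
  have sE: "symp ?E" by (rule E2_sym[OF a b])
  have sE': "symp ?E'" by (rule E2_sym[OF ia ib])
  have X'X: "X' \<subseteq> X" by (auto simp: X'_def)
  have bu: "b' u = b u" if "u \<noteq> b x" "u \<noteq> b y" for u using that by (simp add: b'_def)
  have Exy: "?E x y" using x y by (simp add: E2_def y_def)
  have char: "?E'\<^sup>*\<^sup>* u v \<longleftrightarrow> ?E\<^sup>*\<^sup>* u v \<or> ((?E\<^sup>*\<^sup>* u x \<or> ?E\<^sup>*\<^sup>* u y) \<and> (?E\<^sup>*\<^sup>* v x \<or> ?E\<^sup>*\<^sup>* v y))"
    if u: "u \<in> X'" and v: "v \<in> X'" for u v
  proof (rule gpl[OF sE sE', where z = "b x"])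
    fix u v assume uv: "u \<in> X'" "v \<in> X'" "?E u v"
    then show "?E' u v"
    proof -
      have "v = a u \<or> v = b u" using uv by (simp add: E2_def)
      then show ?thesis
      proof
        assume "v = a u" then show ?thesis using uv by (auto simp: E2_def)
      next
        assume vb: "v = b u"
        have "u \<noteq> b x" using uv bx vb by (auto simp: X'_def E2_def)
        moreover have "u \<noteq> b y" using uv by' vb by (auto simp: X'_def E2_def)
        ultimately show ?thesis using uv bu vb by (auto simp: E2_def)
      qed
    qed
  next
    fix u v assume e: "?E' u v"
    show "?E\<^sup>*\<^sup>* u v \<or> ((?E\<^sup>*\<^sup>* u x \<or> ?E\<^sup>*\<^sup>* u y) \<and> (?E\<^sup>*\<^sup>* v x \<or> ?E\<^sup>*\<^sup>* v y))"
    proof (cases "u = b x \<or> u = b y")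
      case True
      have "?E (b x) x" "?E (b y) y" using bx by' x y by (auto simp: E2_def)
      then have "?E\<^sup>*\<^sup>* (b x) x" "?E\<^sup>*\<^sup>* (b y) y" by auto
      moreover have "v = a u \<or> v = b' u" using e by (simp add: E2_def)
      ultimately show ?thesis
      proof (elim disjE)
        assume "v = a u"
        then have "?E u v" using e X'X by (auto simp: E2_def)
        then show ?thesis by auto
      next
        assume vb: "v = b' u"
        show ?thesis using True ne vb \<open>?E\<^sup>*\<^sup>* (b x) x\<close> \<open>?E\<^sup>*\<^sup>* (b y) y\<close>
          by (auto simp: b'_def)
      qed
    next
      case False
      then have "?E u v" using e X'X bu by (auto simp: E2_def)
      then show ?thesis by auto
    qed
  next
    fix w assume w: "w \<in> X'" "?E x w \<or> ?E y w"
    then have "w = b x \<or> w = b y" using y by (auto simp: E2_def X'_def y_def)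
    moreover have "?E' (b y) (b x)" using bx by' y byx bxy' ne
      by (auto simp: E2_def X'_def b'_def)
    ultimately show "?E'\<^sup>*\<^sup>* w (b x)" by auto
  qed (use u v y in \<open>auto simp: X'_def E2_def\<close>)
  have "nc X' ?E' = nc X ?E"
  proof (rule nc_shortcut[OF sE sE' X'X])
    fix u v assume "u \<in> X'" "v \<in> X'"
    note c = char[OF this]
    have s: "\<And>p q. ?E\<^sup>*\<^sup>* p q \<Longrightarrow> ?E\<^sup>*\<^sup>* q p" using rtranclp_sym[OF sE] by blast
    have xy: "?E\<^sup>*\<^sup>* x y" using Exy by auto
    have "?E\<^sup>*\<^sup>* u v" if h: "(?E\<^sup>*\<^sup>* u x \<or> ?E\<^sup>*\<^sup>* u y) \<and> (?E\<^sup>*\<^sup>* v x \<or> ?E\<^sup>*\<^sup>* v y)"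
    proof -
      have ux: "?E\<^sup>*\<^sup>* u x" using h xy s rtranclp_trans[of ?E u y x] by blast
      have vx: "?E\<^sup>*\<^sup>* x v" using h xy s rtranclp_trans[of ?E v y x] by blast
      show ?thesis using rtranclp_trans[OF ux vx] .
    qed
    then show "?E'\<^sup>*\<^sup>* u v \<longleftrightarrow> ?E\<^sup>*\<^sup>* u v" using c by blast
  next
    fix u assume u: "u \<in> X"
    show "\<exists>v\<in>X'. ?E\<^sup>*\<^sup>* u v"
    proof (cases "u \<in> X'")
      case True then show ?thesis by auto
    next
      case False
      then have "u = x \<or> u = y" using u by (auto simp: X'_def)
      moreover have "?E x (b x)" "?E y (b y)" using bx by' x y by (auto simp: E2_def)
      moreover have "b x \<in> X'" "b y \<in> X'" using bx by' bxy' byx by (auto simp: X'_def)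
      ultimately show ?thesis by (metis r_into_rtranclp)
    qed
  qed
  then show ?thesis by (simp add: X'_def y_def b'_def)
qed


lemma rew1:
  assumes f: "invol X f" and x: "x \<in> X" and y: "y \<in> X" and u: "u \<in> X" and fu: "f u \<noteq> x" "f u \<noteq> y"
  shows "(f(f x := f y, f y := f x)) u = f u"
proof -
  have "u \<noteq> f x" using invol_eq[OF f u x] fu by auto
  moreover have "u \<noteq> f y" using invol_eq[OF f u y] fu by auto
  ultimately show ?thesis by simp
qed

lemma rew2: "(f(f x := f y, f y := f x)) u = f u \<or> (u = f x \<and> (f(f x := f y, f y := f x)) u = f y)
   \<or> (u = f y \<and> (f(f x := f y, f y := f x)) u = f x)"
  by auto

lemma parity_path:
  assumes fin: "finite X" and b: "invol X b" and c: "invol X c" and x: "x \<in> X" and y: "y \<in> X"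
    and xy: "x \<noteq> y" and nxy: "\<not> (E2 X b c)\<^sup>*\<^sup>* x y"
  shows "(E2 (X - {x, y}) (b(b x := b y, b y := b x)) (c(c x := c y, c y := c x)))\<^sup>*\<^sup>* (b x) (c x)"
proof (rule ccontr)
  define X' where "X' = X - {x, y}"
  define b' where "b' = b(b x := b y, b y := b x)"
  define c' where "c' = c(c x := c y, c y := c x)"
  let ?F = "E2 X b c" and ?F' = "E2 X' b' c'"
  assume nc: "\<not> (E2 (X - {x, y}) (b(b x := b y, b y := b x)) (c(c x := c y, c y := c x)))\<^sup>*\<^sup>* (b x) (c x)"
  then have nc': "\<not> ?F'\<^sup>*\<^sup>* (b x) (c x)" by (simp add: X'_def b'_def c'_def)
  note bx = involD[OF b x] and by' = involD[OF b y] and cx = involD[OF c x] and cy = involD[OF c y]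
  have sF: "symp ?F" by (rule E2_sym[OF b c])
  have s: "\<And>p q. ?F\<^sup>*\<^sup>* p q \<Longrightarrow> ?F\<^sup>*\<^sup>* q p" using rtranclp_sym[OF sF] by blast
  have Fyb: "?F\<^sup>*\<^sup>* (b y) y" "?F\<^sup>*\<^sup>* (c y) y" using y by' cy by (auto simp: E2_def intro!: r_into_rtranclp)
  have Fxb: "?F\<^sup>*\<^sup>* x (b x)" "?F\<^sup>*\<^sup>* x (c x)" using x bx cx by (auto simp: E2_def intro!: r_into_rtranclp)
  have bxy: "b x \<noteq> y" using Fxb nxy by auto
  have cxy: "c x \<noteq> y" using Fxb nxy by auto
  define K where "K = {w \<in> X'. ?F'\<^sup>*\<^sup>* (b x) w \<and> ?F\<^sup>*\<^sup>* x w}"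
  have finK: "finite K" using fin by (auto simp: K_def X'_def)
  have xK: "x \<notin> K" by (auto simp: K_def X'_def)
  have noty: "\<not> ?F\<^sup>*\<^sup>* x u" if "?F\<^sup>*\<^sup>* u y" for u
    using that nxy rtranclp_trans by metis
  have evK: "even (card K)"
  proof (rule even_invol_card[OF finK])
    fix u assume u: "u \<in> K"
    then have uX': "u \<in> X'" and r1: "?F'\<^sup>*\<^sup>* (b x) u" and r2: "?F\<^sup>*\<^sup>* x u" by (auto simp: K_def)
    have uX: "u \<in> X" using uX' by (simp add: X'_def)
    note cu = involD[OF c uX]
    have "u \<noteq> c x" using r1 nc' by auto
    then have cux: "c u \<noteq> x" using invol_eq[OF c uX x] by auto
    have "u \<noteq> c y" using r2 noty Fyb by auto
    then have cuy: "c u \<noteq> y" using invol_eq[OF c uX y] by auto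
    have cu': "c' u = c u" unfolding c'_def by (rule rew1[OF c x y uX cux cuy])
    have cuX': "c u \<in> X'" using cu cux cuy by (simp add: X'_def)
    have "?F' u (c u)" using uX' cuX' cu' by (simp add: E2_def)
    then have "?F'\<^sup>*\<^sup>* (b x) (c u)" using r1 by auto
    moreover have "?F u (c u)" using uX cu by (simp add: E2_def)
    then have "?F\<^sup>*\<^sup>* x (c u)" using r2 by auto
    ultimately show "c u \<in> K \<and> c u \<noteq> u \<and> c (c u) = u" using cuX' cu by (simp add: K_def)
  qed
  have evK1: "even (card (insert x K))"
  proof (rule even_invol_card)
    show "finite (insert x K)" using finK by simp
    fix u assume u: "u \<in> insert x K"
    show "b u \<in> insert x K \<and> b u \<noteq> u \<and> b (b u) = u"
    proof (cases "u = x")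
      case True
      have "b x \<in> X'" using bx bxy by (simp add: X'_def)
      then have "b x \<in> K" using Fxb by (simp add: K_def)
      then show ?thesis using True bx by simp
    next
      case False
      then have uK: "u \<in> K" using u by simp
      then have uX': "u \<in> X'" and r1: "?F'\<^sup>*\<^sup>* (b x) u" and r2: "?F\<^sup>*\<^sup>* x u" by (auto simp: K_def)
      have uX: "u \<in> X" using uX' by (simp add: X'_def)
      note bu = involD[OF b uX]
      show ?thesis
      proof (cases "b u = x")
        case True then show ?thesis using bu by simp
      next
        case bux: False
        have "u \<noteq> b y" using r2 noty Fyb by auto
        then have buy: "b u \<noteq> y" using invol_eq[OF b uX y] by auto
        have bu': "b' u = b u" unfolding b'_def by (rule rew1[OF b x y uX bux buy])
        have buX': "b u \<in> X'" using bu bux buy by (simp add: X'_def)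
        have "?F' u (b u)" using uX' buX' bu' by (simp add: E2_def)
        then have "?F'\<^sup>*\<^sup>* (b x) (b u)" using r1 by auto
        moreover have "?F u (b u)" using uX bu by (simp add: E2_def)
        then have "?F\<^sup>*\<^sup>* x (b u)" using r2 by auto
        ultimately show ?thesis using buX' bu by (simp add: K_def)
      qed
    qed
  qed
  have "card (insert x K) = card K + 1" using finK xK by simp
  then show False using evK evK1 by simp
qed


lemma red_merge:
  assumes fin: "finite X" and b: "invol X b" and c: "invol X c" and x: "x \<in> X" and y: "y \<in> X"
    and xy: "x \<noteq> y" and nxy: "\<not> (E2 X b c)\<^sup>*\<^sup>* x y"
  shows "nc X (E2 X b c) = nc (X - {x, y}) (E2 (X - {x, y}) (b(b x := b y, b y := b x)) (c(c x := c y, c y := c x))) + 1"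
proof -
  define X' where "X' = X - {x, y}"
  define b' where "b' = b(b x := b y, b y := b x)"
  define c' where "c' = c(c x := c y, c y := c x)"
  let ?F = "E2 X b c" and ?F' = "E2 X' b' c'"
  note bx = involD[OF b x] and by' = involD[OF b y] and cx = involD[OF c x] and cy = involD[OF c y]
  have sF: "symp ?F" by (rule E2_sym[OF b c])
  have Fyb: "?F (b y) y" "?F (c y) y" "?F y (b y)" "?F y (c y)" using y by' cy by (auto simp: E2_def)
  have Fxb: "?F x (b x)" "?F x (c x)" "?F (b x) x" "?F (c x) x" using x bx cx by (auto simp: E2_def)
  have bxy: "b x \<noteq> y" using Fxb nxy by auto
  have cxy: "c x \<noteq> y" using Fxb nxy by auto
  have ib: "invol X' b'" unfolding X'_def b'_def by (rule invol_swap[OF b x y xy bxy])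
  have ic: "invol X' c'" unfolding X'_def c'_def by (rule invol_swap[OF c x y xy cxy])
  have sF': "symp ?F'" by (rule E2_sym[OF ib ic])
  have par: "?F'\<^sup>*\<^sup>* (b x) (c x)" using parity_path[OF fin b c x y xy nxy] by (simp add: X'_def b'_def c'_def)
  have X'X: "X' \<subseteq> X" by (auto simp: X'_def)
  have byx: "b y \<noteq> x" using invol_eq[OF b y x] bxy by auto
  have cyx: "c y \<noteq> x" using invol_eq[OF c y x] cxy by auto
  have mem: "b x \<in> X'" "c x \<in> X'" "b y \<in> X'" "c y \<in> X'" using bx cx by' cy bxy cxy byx cyx
    by (auto simp: X'_def)
  have char: "?F'\<^sup>*\<^sup>* u v \<longleftrightarrow> ?F\<^sup>*\<^sup>* u v \<or> ((?F\<^sup>*\<^sup>* u x \<or> ?F\<^sup>*\<^sup>* u y) \<and> (?F\<^sup>*\<^sup>* v x \<or> ?F\<^sup>*\<^sup>* v y))"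
    if u: "u \<in> X'" and v: "v \<in> X'" for u v
  proof (rule gpl[OF sF sF', where z = "b x"])
    fix u v assume uv: "u \<in> X'" "v \<in> X'" "?F u v"
    then have uX: "u \<in> X" and nv: "v \<noteq> x" "v \<noteq> y" by (auto simp: X'_def)
    have "v = b u \<or> v = c u" using uv by (simp add: E2_def)
    then show "?F' u v"
    proof
      assume vb: "v = b u"
      have "b' u = b u" unfolding b'_def by (rule rew1[OF b x y uX]) (use nv vb in auto)
      then show ?thesis using uv vb by (simp add: E2_def)
    next
      assume vc: "v = c u"
      have "c' u = c u" unfolding c'_def by (rule rew1[OF c x y uX]) (use nv vc in auto)
      then show ?thesis using uv vc by (simp add: E2_def)
    qed
  next
    fix u v assume e: "?F' u v"
    then have uX: "u \<in> X" "v \<in> X" using X'X by (auto simp: E2_def)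
    have "v = b' u \<or> v = c' u" using e by (simp add: E2_def)
    then show "?F\<^sup>*\<^sup>* u v \<or> ((?F\<^sup>*\<^sup>* u x \<or> ?F\<^sup>*\<^sup>* u y) \<and> (?F\<^sup>*\<^sup>* v x \<or> ?F\<^sup>*\<^sup>* v y))"
    proof
      assume vb: "v = b' u"
      have "b' u = b u \<or> (u = b x \<and> b' u = b y) \<or> (u = b y \<and> b' u = b x)"
        using rew2[of b x y u] by (simp add: b'_def)
      then show ?thesis
      proof (elim disjE conjE)
        assume "b' u = b u" then have "?F u v" using vb uX by (simp add: E2_def)
        then show ?thesis by auto
      next
        assume "u = b x" "b' u = b y"
        then show ?thesis using vb Fxb Fyb by (auto intro: r_into_rtranclp)
      next
        assume "u = b y" "b' u = b x"
        then show ?thesis using vb Fxb Fyb by (auto intro: r_into_rtranclp)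
      qed
    next
      assume vc: "v = c' u"
      have "c' u = c u \<or> (u = c x \<and> c' u = c y) \<or> (u = c y \<and> c' u = c x)"
        using rew2[of c x y u] by (simp add: c'_def)
      then show ?thesis
      proof (elim disjE conjE)
        assume "c' u = c u" then have "?F u v" using vc uX by (simp add: E2_def)
        then show ?thesis by auto
      next
        assume "u = c x" "c' u = c y"
        then show ?thesis using vc Fxb Fyb by (auto intro: r_into_rtranclp)
      next
        assume "u = c y" "c' u = c x"
        then show ?thesis using vc Fxb Fyb by (auto intro: r_into_rtranclp)
      qed
    qed
  next
    fix w assume w: "w \<in> X'" "?F x w \<or> ?F y w"
    have "w = b x \<or> w = c x \<or> w = b y \<or> w = c y" using w by (auto simp: E2_def)
    moreover have "?F' (b y) (b x)" using mem by (simp add: E2_def b'_def)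
    moreover have "?F' (c y) (c x)" using mem by (simp add: E2_def c'_def)
    moreover have "?F'\<^sup>*\<^sup>* (c x) (b x)" using par rtranclp_sym[OF sF'] by blast
    ultimately show "?F'\<^sup>*\<^sup>* w (b x)" by (metis r_into_rtranclp rtranclp.rtrancl_refl converse_rtranclp_into_rtranclp)
  qed (use u v xy in \<open>auto simp: X'_def E2_def\<close>)
  have "nc X ?F = nc X' ?F' + 1"
  proof (rule nc_merge[OF fin sF sF' X'X x y nxy char])
    fix u assume u: "u \<in> X"
    show "\<exists>v\<in>X'. ?F\<^sup>*\<^sup>* u v"
    proof (cases "u \<in> X'")
      case True then show ?thesis by auto
    next
      case False
      then have "u = x \<or> u = y" using u by (auto simp: X'_def)
      then show ?thesis using mem Fxb Fyb by (metis r_into_rtranclp)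
    qed
  qed
  then show ?thesis by (simp add: X'_def b'_def c'_def)
qed


lemma red_triple:
  assumes fin: "finite X" and a: "invol X a" and b: "invol X b" and c: "invol X c" and x: "x \<in> X"
    and nxy: "\<not> (E2 X b c)\<^sup>*\<^sup>* x (a x)"
  shows "nc (X - {x, a x}) (E3 (X - {x, a x}) a (b(b x := b (a x), b (a x) := b x)) (c(c x := c (a x), c (a x) := c x)))
       = nc X (E3 X a b c)"
proof -
  define y where "y = a x"
  define X' where "X' = X - {x, y}"
  define b' where "b' = b(b x := b y, b y := b x)"
  define c' where "c' = c(c x := c y, c y := c x)"
  note ax = involD[OF a x]
  have y: "y \<in> X" "y \<noteq> x" "a y = x" using ax by (auto simp: y_def)
  have xy: "x \<noteq> y" using y by simp
  have nxy': "\<not> (E2 X b c)\<^sup>*\<^sup>* x y" using nxy by (simp add: y_def)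
  let ?F = "E2 X b c" and ?F' = "E2 X' b' c'"
  let ?E = "E3 X a b c" and ?E' = "E3 X' a b' c'"
  note bx = involD[OF b x] and by' = involD[OF b y(1)] and cx = involD[OF c x] and cy = involD[OF c y(1)]
  have Fxb: "?F x (b x)" "?F x (c x)" using x bx cx by (auto simp: E2_def)
  have bxy: "b x \<noteq> y" using Fxb nxy' by auto
  have cxy: "c x \<noteq> y" using Fxb nxy' by auto
  have ib: "invol X' b'" unfolding X'_def b'_def by (rule invol_swap[OF b x y(1) xy bxy])
  have ic: "invol X' c'" unfolding X'_def c'_def by (rule invol_swap[OF c x y(1) xy cxy])
  have ia: "invol X' a" unfolding invol_def X'_def
  proof
    fix u assume u: "u \<in> X - {x, y}"
    note au = involD[OF a, of u]
    have uX: "u \<in> X" using u by simp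
    have "a u \<noteq> x" using u invol_eq[OF a uX x] y_def by auto
    moreover have "a u \<noteq> y" using u invol_eq[OF a uX y(1)] y by auto
    ultimately show "a u \<in> X - {x, y} \<and> a u \<noteq> u \<and> a (a u) = u" using u au by auto
  qed
  have sE: "symp ?E" by (rule E3_sym[OF a b c])
  have sE': "symp ?E'" by (rule E3_sym[OF ia ib ic])
  have par: "?F'\<^sup>*\<^sup>* (b x) (c x)" using parity_path[OF fin b c x y(1) xy nxy'] by (simp add: X'_def b'_def c'_def)
  have par': "?E'\<^sup>*\<^sup>* (c x) (b x)"
  proof -
    have "?E'\<^sup>*\<^sup>* (b x) (c x)" using par by (rule rtranclp_mono[THEN predicate2D, rotated]) (auto intro: E2_E3)
    then show ?thesis using rtranclp_sym[OF sE'] by blast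
  qed
  have X'X: "X' \<subseteq> X" by (auto simp: X'_def)
  have byx: "b y \<noteq> x" using invol_eq[OF b y(1) x] bxy by auto
  have cyx: "c y \<noteq> x" using invol_eq[OF c y(1) x] cxy by auto
  have mem: "b x \<in> X'" "c x \<in> X'" "b y \<in> X'" "c y \<in> X'" using bx cx by' cy bxy cxy byx cyx
    by (auto simp: X'_def)
  have Eyb: "?E (b y) y" "?E (c y) y" using y by' cy by (auto simp: E3_def)
  have Exb: "?E (b x) x" "?E (c x) x" using x bx cx by (auto simp: E3_def)
  have Exy: "?E x y" using x y by (auto simp: E3_def y_def)
  have char: "?E'\<^sup>*\<^sup>* u v \<longleftrightarrow> ?E\<^sup>*\<^sup>* u v \<or> ((?E\<^sup>*\<^sup>* u x \<or> ?E\<^sup>*\<^sup>* u y) \<and> (?E\<^sup>*\<^sup>* v x \<or> ?E\<^sup>*\<^sup>* v y))"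
    if u: "u \<in> X'" and v: "v \<in> X'" for u v
  proof (rule gpl[OF sE sE', where z = "b x"])
    fix u v assume uv: "u \<in> X'" "v \<in> X'" "?E u v"
    then have uX: "u \<in> X" and nv: "v \<noteq> x" "v \<noteq> y" by (auto simp: X'_def)
    have "v = a u \<or> v = b u \<or> v = c u" using uv by (simp add: E3_def)
    then show "?E' u v"
    proof (elim disjE)
      assume "v = a u" then show ?thesis using uv by (simp add: E3_def)
    next
      assume vb: "v = b u"
      have "b' u = b u" unfolding b'_def by (rule rew1[OF b x y(1) uX]) (use nv vb in auto)
      then show ?thesis using uv vb by (simp add: E3_def)
    next
      assume vc: "v = c u"
      have "c' u = c u" unfolding c'_def by (rule rew1[OF c x y(1) uX]) (use nv vc in auto)
      then show ?thesis using uv vc by (simp add: E3_def)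
    qed
  next
    fix u v assume e: "?E' u v"
    then have uX: "u \<in> X" "v \<in> X" using X'X by (auto simp: E3_def)
    have "v = a u \<or> v = b' u \<or> v = c' u" using e by (simp add: E3_def)
    then show "?E\<^sup>*\<^sup>* u v \<or> ((?E\<^sup>*\<^sup>* u x \<or> ?E\<^sup>*\<^sup>* u y) \<and> (?E\<^sup>*\<^sup>* v x \<or> ?E\<^sup>*\<^sup>* v y))"
    proof (elim disjE)
      assume "v = a u" then have "?E u v" using uX by (simp add: E3_def)
      then show ?thesis by auto
    next
      assume vb: "v = b' u"
      have "b' u = b u \<or> (u = b x \<and> b' u = b y) \<or> (u = b y \<and> b' u = b x)"
        using rew2[of b x y u] by (simp add: b'_def)
      then show ?thesis
      proof (elim disjE conjE)
        assume "b' u = b u" then have "?E u v" using vb uX by (simp add: E3_def)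
        then show ?thesis by auto
      next
        assume "u = b x" "b' u = b y"
        then show ?thesis using vb Exb Eyb by (auto intro: r_into_rtranclp)
      next
        assume "u = b y" "b' u = b x"
        then show ?thesis using vb Exb Eyb by (auto intro: r_into_rtranclp)
      qed
    next
      assume vc: "v = c' u"
      have "c' u = c u \<or> (u = c x \<and> c' u = c y) \<or> (u = c y \<and> c' u = c x)"
        using rew2[of c x y u] by (simp add: c'_def)
      then show ?thesis
      proof (elim disjE conjE)
        assume "c' u = c u" then have "?E u v" using vc uX by (simp add: E3_def)
        then show ?thesis by auto
      next
        assume "u = c x" "c' u = c y"
        then show ?thesis using vc Exb Eyb by (auto intro: r_into_rtranclp)
      next
        assume "u = c y" "c' u = c x"
        then show ?thesis using vc Exb Eyb by (auto intro: r_into_rtranclp)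
      qed
    qed
  next
    fix w assume w: "w \<in> X'" "?E x w \<or> ?E y w"
    have "w = b x \<or> w = c x \<or> w = b y \<or> w = c y" using w y by (auto simp: E3_def X'_def y_def)
    moreover have "?E' (b y) (b x)" using mem by (simp add: E3_def b'_def)
    moreover have "?E' (c y) (c x)" using mem by (simp add: E3_def c'_def)
    ultimately show "?E'\<^sup>*\<^sup>* w (b x)" using par'
      by (metis r_into_rtranclp rtranclp.rtrancl_refl converse_rtranclp_into_rtranclp)
  qed (use u v xy in \<open>auto simp: X'_def E3_def\<close>)
  have "nc X' ?E' = nc X ?E"
  proof (rule nc_shortcut[OF sE sE' X'X])
    fix u v assume "u \<in> X'" "v \<in> X'"
    note c = char[OF this]
    have s: "\<And>p q. ?E\<^sup>*\<^sup>* p q \<Longrightarrow> ?E\<^sup>*\<^sup>* q p" using rtranclp_sym[OF sE] by blast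
    have xy: "?E\<^sup>*\<^sup>* x y" using Exy by auto
    have "?E\<^sup>*\<^sup>* u v" if h: "(?E\<^sup>*\<^sup>* u x \<or> ?E\<^sup>*\<^sup>* u y) \<and> (?E\<^sup>*\<^sup>* v x \<or> ?E\<^sup>*\<^sup>* v y)"
    proof -
      have ux: "?E\<^sup>*\<^sup>* u x" using h xy s rtranclp_trans[of ?E u y x] by blast
      have vx: "?E\<^sup>*\<^sup>* x v" using h xy s rtranclp_trans[of ?E v y x] by blast
      show ?thesis using rtranclp_trans[OF ux vx] .
    qed
    then show "?E'\<^sup>*\<^sup>* u v \<longleftrightarrow> ?E\<^sup>*\<^sup>* u v" using c by blast
  next
    fix u assume u: "u \<in> X"
    show "\<exists>v\<in>X'. ?E\<^sup>*\<^sup>* u v"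
    proof (cases "u \<in> X'")
      case True then show ?thesis by auto
    next
      case False
      then have "u = x \<or> u = y" using u by (auto simp: X'_def)
      moreover have "?E x (b x)" "?E y (b y)" using bx by' x y by (auto simp: E3_def)
      ultimately show ?thesis using mem by (metis r_into_rtranclp)
    qed
  qed
  then show ?thesis by (simp add: X'_def y_def b'_def c'_def)
qed


lemma reduce_step:
  assumes fin: "finite X" and a: "invol X a" and b: "invol X b" and c: "invol X c" and x: "x \<in> X"
    and nxy: "\<not> (E2 X b c)\<^sup>*\<^sup>* x (a x)"
  shows "\<exists>X' b' c'. finite X' \<and> card X = card X' + 2 \<and> invol X' a \<and> invol X' b' \<and> invol X' c' \<and>
     nc X' (E2 X' a b') = nc X (E2 X a b) \<and> nc X' (E2 X' a c') = nc X (E2 X a c) \<and>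
     nc X (E2 X b c) = nc X' (E2 X' b' c') + 1 \<and> nc X' (E3 X' a b' c') = nc X (E3 X a b c)"
proof -
  define y where "y = a x"
  note ax = involD[OF a x]
  have y: "y \<in> X" "y \<noteq> x" "a y = x" using ax by (auto simp: y_def)
  note bx = involD[OF b x] and cx = involD[OF c x]
  have "E2 X b c x (b x)" "E2 X b c x (c x)" using x bx cx by (auto simp: E2_def)
  then have bxy: "b x \<noteq> a x" and cxy: "c x \<noteq> a x" using nxy by auto
  define X' where "X' = X - {x, y}"
  define b' where "b' = b(b x := b y, b y := b x)"
  define c' where "c' = c(c x := c y, c y := c x)"
  have ia: "invol X' a" unfolding invol_def X'_def
  proof
    fix u assume u: "u \<in> X - {x, y}"
    note au = involD[OF a, of u]
    have uX: "u \<in> X" using u by simp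
    have "a u \<noteq> x" using u invol_eq[OF a uX x] y_def by auto
    moreover have "a u \<noteq> y" using u invol_eq[OF a uX y(1)] y by auto
    ultimately show "a u \<in> X - {x, y} \<and> a u \<noteq> u \<and> a (a u) = u" using u au by auto
  qed
  have ib: "invol X' b'" unfolding X'_def b'_def by (rule invol_swap[OF b x y(1)]) (use y bxy y_def in auto)
  have ic: "invol X' c'" unfolding X'_def c'_def by (rule invol_swap[OF c x y(1)]) (use y cxy y_def in auto)
  have card: "card X = card X' + 2"
  proof -
    have "{x, y} \<subseteq> X" "card {x, y} = 2" using x y by auto
    then show ?thesis using fin unfolding X'_def
      by (metis card_Diff_subset card_mono finite_subset le_add_diff_inverse2)
  qed
  have p1: "nc X' (E2 X' a b') = nc X (E2 X a b)"
    using red_pair[OF fin a b x bxy] by (simp add: X'_def b'_def y_def)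
  have p2: "nc X' (E2 X' a c') = nc X (E2 X a c)"
    using red_pair[OF fin a c x cxy] by (simp add: X'_def c'_def y_def)
  have p3: "nc X (E2 X b c) = nc X' (E2 X' b' c') + 1"
    using red_merge[OF fin b c x y(1)] y nxy by (simp add: X'_def b'_def c'_def y_def)
  have p4: "nc X' (E3 X' a b' c') = nc X (E3 X a b c)"
    using red_triple[OF fin a b c x nxy] by (simp add: X'_def b'_def c'_def y_def)
  show ?thesis
    by (rule exI[of _ X'], rule exI[of _ b'], rule exI[of _ c'])
       (use fin card ia ib ic p1 p2 p3 p4 in \<open>auto simp: X'_def\<close>)
qed

lemma nc_le_half:
  assumes fin: "finite X" and a: "invol X a" and sE: "symp E" and Ea: "\<And>x. x \<in> X \<Longrightarrow> E x (a x)"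
  shows "2 * nc X E \<le> card X"
proof -
  let ?r = "rel X E"
  have eq: "equiv X ?r" by (rule equiv_rel[OF sE])
  have "card X = card (\<Union>(X // ?r))" using Union_quotient[OF eq] by simp
  also have "\<dots> = sum card (X // ?r)"
  proof (rule card_Union_disjoint)
    show "pairwise disjnt (X // ?r)" unfolding pairwise_def disjnt_def
      using quotient_disj[OF eq] by blast
    fix A assume "A \<in> X // ?r" then show "finite A"
      using fin in_quotient_imp_subset[OF eq] finite_subset by blast
  qed
  also have "\<dots> \<ge> sum (\<lambda>_. 2) (X // ?r)"
  proof (rule sum_mono)
    fix C assume C: "C \<in> X // ?r"
    then obtain u where u: "u \<in> X" "C = ?r `` {u}" by (auto elim: quotientE)
    note au = involD[OF a u(1)]
    have "u \<in> C" "a u \<in> C" using u au Ea[OF u(1)] by (auto simp: rel_def)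
    moreover have "finite C" using C fin in_quotient_imp_subset[OF eq] finite_subset by blast
    ultimately have "card {u, a u} \<le> card C" by (intro card_mono) auto
    moreover have "card {u, a u} = 2" using au by (simp add: eq_commute)
    ultimately show "2 \<le> card C" by simp
  qed
  finally show ?thesis by (simp add: nc_def mult.commute)
qed

lemma rel_eq_closed:
  assumes "\<And>x. x \<in> X \<Longrightarrow> (E2 X f g)\<^sup>*\<^sup>* x (h x)"
  shows "rel X (E3 X h f g) = rel X (E2 X f g)"
proof -
  have "(E3 X h f g)\<^sup>*\<^sup>* u v \<Longrightarrow> (E2 X f g)\<^sup>*\<^sup>* u v" for u v
  proof (induction rule: rtranclp_induct)
    case base then show ?case by simp
  next
    case (step v w)
    then have "w = h v \<or> E2 X f g v w" and vX: "v \<in> X" by (auto simp: E3_def E2_def)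
    then have "(E2 X f g)\<^sup>*\<^sup>* v w" using assms by auto
    then show ?case using step.IH by (rule rtranclp_trans[rotated])
  qed
  moreover have "(E2 X f g)\<^sup>*\<^sup>* u v \<Longrightarrow> (E3 X h f g)\<^sup>*\<^sup>* u v" for u v
    by (rule rtranclp_mono[THEN predicate2D, rotated]) (auto intro: E2_E3)
  ultimately show ?thesis unfolding rel_def by blast
qed

theorem euler_ineq:
  assumes "finite X" "invol X a" "invol X b" "invol X c"
  shows "2 * (nc X (E2 X a b) + nc X (E2 X a c) + nc X (E2 X b c)) \<le> card X + 4 * nc X (E3 X a b c)"
  using assms
proof (induction "card X" arbitrary: X a b c rule: less_induct)
  case less
  note fin = less.prems(1) and a = less.prems(2) and b = less.prems(3) and c = less.prems(4)
  show ?case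
  proof (cases "\<exists>x\<in>X. \<not> (E2 X b c)\<^sup>*\<^sup>* x (a x)")
    case True
    then obtain x where "x \<in> X" "\<not> (E2 X b c)\<^sup>*\<^sup>* x (a x)" by blast
    from reduce_step[OF fin a b c this] obtain X' b' c' where r: "finite X'" "card X = card X' + 2"
      "invol X' a" "invol X' b'" "invol X' c'"
      "nc X' (E2 X' a b') = nc X (E2 X a b)" "nc X' (E2 X' a c') = nc X (E2 X a c)"
      "nc X (E2 X b c) = nc X' (E2 X' b' c') + 1" "nc X' (E3 X' a b' c') = nc X (E3 X a b c)" by blast
    have "2 * (nc X' (E2 X' a b') + nc X' (E2 X' a c') + nc X' (E2 X' b' c')) \<le> card X' + 4 * nc X' (E3 X' a b' c')"
      using less.hyps[of X' a b' c'] r by simp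
    then show ?thesis using r by simp
  next
    case F1: False
    show ?thesis
    proof (cases "\<exists>x\<in>X. \<not> (E2 X a c)\<^sup>*\<^sup>* x (b x)")
      case True
      then obtain x where "x \<in> X" "\<not> (E2 X a c)\<^sup>*\<^sup>* x (b x)" by blast
      from reduce_step[OF fin b a c this] obtain X' a' c' where r: "finite X'" "card X = card X' + 2"
        "invol X' b" "invol X' a'" "invol X' c'"
        "nc X' (E2 X' b a') = nc X (E2 X b a)" "nc X' (E2 X' b c') = nc X (E2 X b c)"
        "nc X (E2 X a c) = nc X' (E2 X' a' c') + 1" "nc X' (E3 X' b a' c') = nc X (E3 X b a c)" by blast
      have "2 * (nc X' (E2 X' b a') + nc X' (E2 X' b c') + nc X' (E2 X' a' c')) \<le> card X' + 4 * nc X' (E3 X' b a' c')"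
        using less.hyps[of X' b a' c'] r by simp
      then show ?thesis using r by (simp add: E2_comm[of X b a] E3_perm(1)[of X b a c])
    next
      case F2: False
      show ?thesis
      proof (cases "\<exists>x\<in>X. \<not> (E2 X a b)\<^sup>*\<^sup>* x (c x)")
        case True
        then obtain x where "x \<in> X" "\<not> (E2 X a b)\<^sup>*\<^sup>* x (c x)" by blast
        from reduce_step[OF fin c a b this] obtain X' a' b' where r: "finite X'" "card X = card X' + 2"
          "invol X' c" "invol X' a'" "invol X' b'"
          "nc X' (E2 X' c a') = nc X (E2 X c a)" "nc X' (E2 X' c b') = nc X (E2 X c b)"
          "nc X (E2 X a b) = nc X' (E2 X' a' b') + 1" "nc X' (E3 X' c a' b') = nc X (E3 X c a b)" by blast
        have "2 * (nc X' (E2 X' c a') + nc X' (E2 X' c b') + nc X' (E2 X' a' b')) \<le> card X' + 4 * nc X' (E3 X' c a' b')"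
          using less.hyps[of X' c a' b'] r by simp
        moreover have "E3 X c a b = E3 X a b c" using E3_perm[of X] by metis
        ultimately show ?thesis using r by (simp add: E2_comm[of X c a] E2_comm[of X c b])
      next
        case F3: False
        have e1: "nc X (E2 X b c) = nc X (E3 X a b c)"
          unfolding nc_def using rel_eq_closed[of X b c a] F1 by simp
        have e2: "nc X (E2 X a c) = nc X (E3 X a b c)"
          unfolding nc_def using rel_eq_closed[of X a c b] F2 E3_perm(1)[of X b a c] by simp
        have e3: "nc X (E2 X a b) = nc X (E3 X a b c)"
          unfolding nc_def using rel_eq_closed[of X a b c] F3 E3_perm[of X] by metis
        have "2 * nc X (E3 X a b c) \<le> card X"
          by (rule nc_le_half[OF fin a E3_sym[OF a b c]]) (use a in \<open>auto simp: E3_def invol_def\<close>)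
        then show ?thesis using e1 e2 e3 by simp
      qed
    qed
  qed
qed


definition addE :: "('a \<Rightarrow> 'a \<Rightarrow> bool) \<Rightarrow> 'a \<Rightarrow> 'a \<Rightarrow> 'a \<Rightarrow> 'a \<Rightarrow> bool" where
  "addE E u v p q \<longleftrightarrow> E p q \<or> (p = u \<and> q = v) \<or> (p = v \<and> q = u)"

lemma addE_sym: "symp E \<Longrightarrow> symp (addE E u v)"
  unfolding symp_def addE_def by blast

lemma addE_char:
  assumes sE: "symp E"
  shows "(addE E u v)\<^sup>*\<^sup>* p q \<longleftrightarrow> E\<^sup>*\<^sup>* p q \<or> ((E\<^sup>*\<^sup>* p u \<or> E\<^sup>*\<^sup>* p v) \<and> (E\<^sup>*\<^sup>* q u \<or> E\<^sup>*\<^sup>* q v))"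
proof
  have s: "\<And>a b. E\<^sup>*\<^sup>* a b \<Longrightarrow> E\<^sup>*\<^sup>* b a" using rtranclp_sym[OF sE] by blast
  assume "(addE E u v)\<^sup>*\<^sup>* p q"
  then show "E\<^sup>*\<^sup>* p q \<or> ((E\<^sup>*\<^sup>* p u \<or> E\<^sup>*\<^sup>* p v) \<and> (E\<^sup>*\<^sup>* q u \<or> E\<^sup>*\<^sup>* q v))"
  proof (induction rule: rtranclp_induct)
    case base then show ?case by simp
  next
    case (step w w')
    from step.hyps(2) have "E w w' \<or> (w = u \<and> w' = v) \<or> (w = v \<and> w' = u)" by (simp add: addE_def)
    then show ?case
    proof (elim disjE conjE)
      assume e: "E w w'"
      then have ww: "E\<^sup>*\<^sup>* w w'" "E\<^sup>*\<^sup>* w' w" using s by auto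
      from step.IH show ?thesis
      proof
        assume "E\<^sup>*\<^sup>* p w" then show ?thesis using ww(1) by (metis rtranclp_trans)
      next
        assume h: "(E\<^sup>*\<^sup>* p u \<or> E\<^sup>*\<^sup>* p v) \<and> (E\<^sup>*\<^sup>* w u \<or> E\<^sup>*\<^sup>* w v)"
        then show ?thesis using ww(2) by (metis rtranclp_trans)
      qed
    next
      assume "w = u" "w' = v"
      then show ?thesis using step.IH by (metis rtranclp.rtrancl_refl rtranclp_trans)
    next
      assume "w = v" "w' = u"
      then show ?thesis using step.IH by (metis rtranclp.rtrancl_refl rtranclp_trans)
    qed
  qed
next
  have m: "\<And>a b. E\<^sup>*\<^sup>* a b \<Longrightarrow> (addE E u v)\<^sup>*\<^sup>* a b"
    by (rule rtranclp_mono[THEN predicate2D, rotated]) (auto simp: addE_def)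
  have s': "\<And>a b. (addE E u v)\<^sup>*\<^sup>* a b \<Longrightarrow> (addE E u v)\<^sup>*\<^sup>* b a"
    using rtranclp_sym[OF addE_sym[OF sE]] by blast
  have uv: "(addE E u v)\<^sup>*\<^sup>* u v" by (rule r_into_rtranclp) (simp add: addE_def)
  assume h: "E\<^sup>*\<^sup>* p q \<or> ((E\<^sup>*\<^sup>* p u \<or> E\<^sup>*\<^sup>* p v) \<and> (E\<^sup>*\<^sup>* q u \<or> E\<^sup>*\<^sup>* q v))"
  show "(addE E u v)\<^sup>*\<^sup>* p q"
    using h m s' uv by (meson rtranclp_trans)
qed

lemma nc_addE:
  assumes fin: "finite X" and sE: "symp E" and u: "u \<in> X" and v: "v \<in> X"
  shows "nc X E \<le> nc X (addE E u v) + 1"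
proof (cases "E\<^sup>*\<^sup>* u v")
  case True
  have s: "\<And>a b. E\<^sup>*\<^sup>* a b \<Longrightarrow> E\<^sup>*\<^sup>* b a" using rtranclp_sym[OF sE] by blast
  have "rel X (addE E u v) = rel X E"
    unfolding rel_def addE_char[OF sE] using True s by (meson rtranclp_trans)
  then show ?thesis by (simp add: nc_def)
next
  case False
  have "card (X // rel X E) = card (X // rel X (addE E u v)) + 1"
  proof (rule quot_merge_card[OF fin equiv_rel[OF sE] equiv_rel[OF addE_sym[OF sE]] u v])
    show "(u, v) \<notin> rel X E" using False by (simp add: rel_def)
    fix a b assume "a \<in> X" "b \<in> X"
    then show "(a, b) \<in> rel X (addE E u v) \<longleftrightarrow> (a, b) \<in> rel X E \<or>
      (((a, u) \<in> rel X E \<or> (a, v) \<in> rel X E) \<and> ((b, u) \<in> rel X E \<or> (b, v) \<in> rel X E))"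
      using u v by (simp add: rel_def addE_char[OF sE])
  qed
  then show ?thesis by (simp add: nc_def)
qed

definition addF :: "('a \<Rightarrow> 'a \<Rightarrow> bool) \<Rightarrow> ('a \<times> 'a) set \<Rightarrow> 'a \<Rightarrow> 'a \<Rightarrow> bool" where
  "addF E F p q \<longleftrightarrow> E p q \<or> (p, q) \<in> F \<or> (q, p) \<in> F"

lemma nc_addF:
  assumes fin: "finite X" and sE: "symp E" and finF: "finite F" and FX: "F \<subseteq> X \<times> X"
  shows "nc X E \<le> nc X (addF E F) + card F"
  using finF FX
proof (induction F rule: finite_induct)
  case empty
  have "addF E {} = E" by (intro ext) (simp add: addF_def)
  then show ?case by simp
next
  case (insert e F)
  obtain u v where e: "e = (u, v)" by (cases e)
  have uv: "u \<in> X" "v \<in> X" using insert.prems e by auto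
  have sF: "symp (addF E F)" using sE unfolding symp_def addF_def by blast
  have eq: "addF E (insert e F) = addE (addF E F) u v"
    by (intro ext) (auto simp: addF_def addE_def e)
  have "nc X E \<le> nc X (addF E F) + card F" using insert by simp
  also have "nc X (addF E F) \<le> nc X (addF E (insert e F)) + 1"
    using nc_addE[OF fin sF uv] eq by simp
  finally show ?case using insert by simp
qed

lemma nc_le_one:
  assumes sE: "symp E" and x0: "x0 \<in> X" and all: "\<And>x. x \<in> X \<Longrightarrow> E\<^sup>*\<^sup>* x x0"
  shows "nc X E \<le> 1"
proof -
  have eq: "equiv X (rel X E)" by (rule equiv_rel[OF sE])
  have "X // rel X E \<subseteq> {rel X E `` {x0}}"
  proof
    fix C assume "C \<in> X // rel X E"
    then obtain x where x: "x \<in> X" "C = rel X E `` {x}" by (auto elim: quotientE)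
    then have "(x, x0) \<in> rel X E" using all x0 by (simp add: rel_def)
    then show "C \<in> {rel X E `` {x0}}" using x eq by (simp add: equiv_class_eq)
  qed
  then have "card (X // rel X E) \<le> card {rel X E `` {x0}}" by (rule card_mono[rotated]) simp
  then show ?thesis unfolding nc_def by simp
qed

lemma nc_ge:
  assumes sE: "symp E" and RX: "R \<subseteq> X" and fin: "finite X"
    and dis: "\<And>r1 r2. r1 \<in> R \<Longrightarrow> r2 \<in> R \<Longrightarrow> E\<^sup>*\<^sup>* r1 r2 \<Longrightarrow> r1 = r2"
  shows "card R \<le> nc X E"
proof -
  have eq: "equiv X (rel X E)" by (rule equiv_rel[OF sE])
  have inj: "inj_on (\<lambda>r. rel X E `` {r}) R"
  proof (rule inj_onI)
    fix r1 r2 assume r: "r1 \<in> R" "r2 \<in> R" "rel X E `` {r1} = rel X E `` {r2}"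
    then have "(r1, r2) \<in> rel X E" using eq RX by (metis eq_equiv_class subsetD)
    then show "r1 = r2" using dis r by (simp add: rel_def)
  qed
  have "(\<lambda>r. rel X E `` {r}) ` R \<subseteq> X // rel X E" using RX by (auto intro: quotientI)
  moreover have "finite (X // rel X E)" using fin eq by (simp add: finite_quotient equiv_type)
  ultimately have "card ((\<lambda>r. rel X E `` {r}) ` R) \<le> nc X E" unfolding nc_def by (rule card_mono[rotated])
  then show ?thesis using card_image[OF inj] by simp
qed


definition En :: "gauss \<Rightarrow> nat \<Rightarrow> nat" where
  "En G p = 2 * seg_in G p + 1"

definition pt :: "gauss \<Rightarrow> nat \<Rightarrow> nat" where
  "pt G e = (if even e then e div 2 else (e div 2 + 1) mod npts G)"

definition crp :: "gauss \<Rightarrow> nat \<Rightarrow> nat" where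
  "crp G p = (THE c. c \<in> crossings G \<and> (ovr G c = p \<or> und G c = p))"

definition oth :: "gauss \<Rightarrow> nat \<Rightarrow> nat" where
  "oth G p = (if ovr G (crp G p) = p then und G (crp G p) else ovr G (crp G p))"

definition mode :: "gauss \<Rightarrow> nat set \<Rightarrow> (nat \<Rightarrow> nat) \<Rightarrow> nat \<Rightarrow> nat" where
  "mode G C s c = (if c \<notin> C then 0 else if oriented_smoothing G s c then 1 else 2)"

definition bet :: "gauss \<Rightarrow> nat set \<Rightarrow> (nat \<Rightarrow> nat) \<Rightarrow> nat \<Rightarrow> nat" where
  "bet G C s e = (let p = pt G e; q = oth G p; md = mode G C s (crp G p) in
     if md = 0 then (if even e then En G p else 2 * p)
     else if md = 1 then (if even e then En G q else 2 * q)
     else (if even e then 2 * q else En G q))"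

definition alp :: "nat \<Rightarrow> nat" where
  "alp e = (if even e then e + 1 else e - 1)"

definition ends :: "gauss \<Rightarrow> nat set" where
  "ends G = {..<2 * npts G}"

lemma gd_pts:
  assumes gd: "gauss_diagram G"
  shows "(\<lambda>(c, b). if b then ovr G c else und G c) ` (crossings G \<times> (UNIV :: bool set)) = {..<npts G}"
proof -
  let ?f = "\<lambda>(c, b). if b then ovr G c else und G c"
  let ?D = "crossings G \<times> (UNIV :: bool set)"
  have inj: "inj_on ?f ?D" using gd by (simp add: gauss_diagram_def)
  have sub: "?f ` ?D \<subseteq> {..<npts G}" using gd by (auto simp: gauss_diagram_def)
  have "card ?D = npts G" by (simp add: crossings_def npts_def card_cartesian_product)
  then have "card (?f ` ?D) = card {..<npts G}" using card_image[OF inj] by simp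
  then show ?thesis using sub by (simp add: card_subset_eq)
qed

lemma gd_inj:
  assumes gd: "gauss_diagram G" and c: "c \<in> crossings G" and d: "d \<in> crossings G"
  shows "ovr G c = ovr G d \<longleftrightarrow> c = d" "und G c = und G d \<longleftrightarrow> c = d" "ovr G c \<noteq> und G d"
proof -
  have inj: "inj_on (\<lambda>(c, b). if b then ovr G c else und G c) (crossings G \<times> (UNIV :: bool set))"
    using gd by (simp add: gauss_diagram_def)
  show "ovr G c = ovr G d \<longleftrightarrow> c = d" using inj_onD[OF inj, of "(c, True)" "(d, True)"] c d by auto
  show "und G c = und G d \<longleftrightarrow> c = d" using inj_onD[OF inj, of "(c, False)" "(d, False)"] c d by auto
  show "ovr G c \<noteq> und G d" using inj_onD[OF inj, of "(c, True)" "(d, False)"] c d by auto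
qed

lemma gd_bounds:
  assumes gd: "gauss_diagram G" and c: "c \<in> crossings G"
  shows "ovr G c < npts G" "und G c < npts G"
  using gd c by (auto simp: gauss_diagram_def)

lemma crp_spec:
  assumes gd: "gauss_diagram G" and p: "p < npts G"
  shows "crp G p \<in> crossings G \<and> (ovr G (crp G p) = p \<or> und G (crp G p) = p)"
proof -
  have "p \<in> (\<lambda>(c, b). if b then ovr G c else und G c) ` (crossings G \<times> (UNIV :: bool set))"
    using p gd_pts[OF gd] by simp
  then obtain cb where cb: "cb \<in> crossings G \<times> (UNIV :: bool set)" "p = (\<lambda>(c, b). if b then ovr G c else und G c) cb"
    by blast
  obtain c b where cbe: "cb = (c, b)" by (cases cb)
  have ex: "c \<in> crossings G \<and> (ovr G c = p \<or> und G c = p)"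
  proof (cases b)
    case True then show ?thesis using cb cbe by simp
  next
    case False then show ?thesis using cb cbe by simp
  qed
  have uniq: "d = c" if "d \<in> crossings G \<and> (ovr G d = p \<or> und G d = p)" for d
  proof -
    have d: "d \<in> crossings G" and c: "c \<in> crossings G" using that ex by auto
    have o: "ovr G d = ovr G c \<Longrightarrow> d = c" using gd_inj(1)[OF gd d c] by simp
    have u: "und G d = und G c \<Longrightarrow> d = c" using gd_inj(2)[OF gd d c] by simp
    have x1: "ovr G d \<noteq> und G c" using gd_inj(3)[OF gd d c] .
    have x2: "ovr G c \<noteq> und G d" using gd_inj(3)[OF gd c d] .
    from that ex show ?thesis
    proof (elim conjE disjE)
      assume "ovr G d = p" "ovr G c = p" then show ?thesis using o by simp
    next
      assume "ovr G d = p" "und G c = p" then show ?thesis using x1 by simp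
    next
      assume "und G d = p" "ovr G c = p" then show ?thesis using x2 by simp
    next
      assume "und G d = p" "und G c = p" then show ?thesis using u by simp
    qed
  qed
  show ?thesis unfolding crp_def by (rule theI[of _ c]) (use ex uniq in blast)+
qed

lemma crp_eq:
  assumes gd: "gauss_diagram G" and c: "c \<in> crossings G"
  shows "crp G (ovr G c) = c" "crp G (und G c) = c"
proof -
  note b = gd_bounds[OF gd c]
  show "crp G (ovr G c) = c"
  proof -
    define d where "d = crp G (ovr G c)"
    have d: "d \<in> crossings G" "ovr G d = ovr G c \<or> und G d = ovr G c"
      using crp_spec[OF gd b(1)] by (auto simp: d_def)
    have "d = c"
    proof (cases "ovr G d = ovr G c")
      case True then show ?thesis using gd_inj(1)[OF gd d(1) c] gd_inj(3)[OF gd c d(1)] gd_inj(3)[OF gd d(1) c] by simp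
    next
      case False then have "und G d = ovr G c" using d by simp
      then show ?thesis using gd_inj(2)[OF gd d(1) c] gd_inj(3)[OF gd c d(1)] gd_inj(3)[OF gd d(1) c] by simp
    qed
    then show ?thesis by (simp add: d_def)
  qed
  show "crp G (und G c) = c"
  proof -
    define d where "d = crp G (und G c)"
    have d: "d \<in> crossings G" "ovr G d = und G c \<or> und G d = und G c"
      using crp_spec[OF gd b(2)] by (auto simp: d_def)
    have "d = c"
    proof (cases "ovr G d = und G c")
      case True then show ?thesis using gd_inj(1)[OF gd d(1) c] gd_inj(3)[OF gd c d(1)] gd_inj(3)[OF gd d(1) c] by simp
    next
      case False then have "und G d = und G c" using d by simp
      then show ?thesis using gd_inj(2)[OF gd d(1) c] gd_inj(3)[OF gd c d(1)] gd_inj(3)[OF gd d(1) c] by simp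
    qed
    then show ?thesis by (simp add: d_def)
  qed
qed

lemma oth_props:
  assumes gd: "gauss_diagram G" and p: "p < npts G"
  shows "oth G p < npts G" "oth G p \<noteq> p" "crp G (oth G p) = crp G p" "oth G (oth G p) = p"
proof -
  obtain c where c: "c = crp G p" by simp
  have cc: "c \<in> crossings G" "ovr G c = p \<or> und G c = p" using crp_spec[OF gd p] c by auto
  note b = gd_bounds[OF gd cc(1)]
  have ne: "ovr G c \<noteq> und G c" using gd_inj(3)[OF gd cc(1) cc(1)] .
  note ce = crp_eq[OF gd cc(1)]
  show "oth G p < npts G" using b by (simp add: oth_def c[symmetric])
  show "oth G p \<noteq> p" using cc ne by (auto simp: oth_def c[symmetric])
  show "crp G (oth G p) = crp G p" using ce by (simp add: oth_def c[symmetric])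
  show "oth G (oth G p) = p" using cc ne ce by (auto simp: oth_def c[symmetric])
qed

lemma npos: "gauss_diagram G \<Longrightarrow> ncr G > 0 \<Longrightarrow> npts G > 0"
  by (simp add: npts_def)

lemma seg_in_lt: "npts G > 0 \<Longrightarrow> seg_in G p < npts G"
  by (simp add: seg_in_def)

lemma seg_in_val: "p < npts G \<Longrightarrow> seg_in G p = (if p = 0 then npts G - 1 else p - 1)"
proof (cases "p = 0")
  case True
  assume "p < npts G" then show ?thesis using True by (simp add: seg_in_def)
next
  case False
  assume p: "p < npts G"
  have "p + npts G - 1 = (p - 1) + npts G" using False by simp
  then have "seg_in G p = (p - 1 + npts G) mod npts G" by (simp add: seg_in_def)
  also have "\<dots> = p - 1" using p by simp
  finally show ?thesis using False by simp
qed

lemma seg_in_inj: "p < npts G \<Longrightarrow> q < npts G \<Longrightarrow> seg_in G p = seg_in G q \<longleftrightarrow> p = q"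
  using seg_in_val[of p G] seg_in_val[of q G] by auto


context
  fixes G :: gauss
  assumes gd: "gauss_diagram G" and pos: "ncr G > 0"
begin

lemma Npos: "npts G > 0" using pos by (simp add: npts_def)

lemma En_props:
  assumes p: "p < npts G"
  shows "En G p < 2 * npts G" "odd (En G p)" "pt G (En G p) = p" "En G p div 2 = seg_in G p"
proof -
  have s: "seg_in G p < npts G" using seg_in_lt Npos by blast
  show "En G p < 2 * npts G" using s by (simp add: En_def)
  show "odd (En G p)" by (simp add: En_def)
  show "En G p div 2 = seg_in G p" by (simp add: En_def)
  show "pt G (En G p) = p"
  proof (cases "p = 0")
    case True
    then have "seg_in G p + 1 = npts G" using seg_in_val[OF p] Npos by simp
    then show ?thesis using True by (simp add: pt_def En_def)
  next
    case False
    then have "seg_in G p + 1 = p" using seg_in_val[OF p] by simp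
    then show ?thesis using p by (simp add: pt_def En_def)
  qed
qed

lemma S_props:
  assumes p: "p < npts G"
  shows "2 * p < 2 * npts G" "pt G (2 * p) = p"
  using p by (auto simp: pt_def)

lemma end_cases:
  assumes e: "e < 2 * npts G"
  shows "pt G e < npts G" "even e \<Longrightarrow> e = 2 * pt G e" "odd e \<Longrightarrow> e = En G (pt G e)"
proof -
  show "pt G e < npts G" using e Npos by (auto simp: pt_def)
  show "even e \<Longrightarrow> e = 2 * pt G e" by (simp add: pt_def)
  assume o: "odd e"
  define i where "i = e div 2"
  have ei: "e = 2 * i + 1" using o by (simp add: i_def)
  have i: "i < npts G" using e ei by simp
  show "e = En G (pt G e)"
  proof (cases "i + 1 = npts G")
    case True
    then have "pt G e = 0" using o by (simp add: pt_def i_def[symmetric])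
    then show ?thesis using seg_in_val[of 0 G] Npos True ei by (simp add: En_def)
  next
    case False
    then have pe: "pt G e = i + 1" using o i by (simp add: pt_def i_def[symmetric])
    then have "seg_in G (pt G e) = i" using seg_in_val[of "i + 1" G] False i by simp
    then show ?thesis using ei by (simp add: En_def)
  qed
qed

lemma bet_S:
  assumes p: "p < npts G"
  shows "bet G C s (2 * p) = (if mode G C s (crp G p) = 0 then En G p
      else if mode G C s (crp G p) = 1 then En G (oth G p) else 2 * oth G p)"
  using S_props[OF p] by (simp add: bet_def Let_def)

lemma bet_E:
  assumes p: "p < npts G"
  shows "bet G C s (En G p) = (if mode G C s (crp G p) = 0 then 2 * p
      else if mode G C s (crp G p) = 1 then 2 * oth G p else En G (oth G p))"
  using En_props[OF p] by (simp add: bet_def Let_def)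

lemma En_inj: "p < npts G \<Longrightarrow> q < npts G \<Longrightarrow> En G p = En G q \<longleftrightarrow> p = q"
  using seg_in_inj by (simp add: En_def)

lemma En_S: "En G p \<noteq> 2 * q"
  by (simp add: En_def) presburger

lemma S_En: "2 * q \<noteq> En G p"
  using En_S by metis

lemma bet_props:
  assumes e: "e < 2 * npts G"
  shows "bet G C s e < 2 * npts G \<and> bet G C s e \<noteq> e \<and> bet G C s (bet G C s e) = e"
proof -
  define p where "p = pt G e"
  have p: "p < npts G" using end_cases(1)[OF e] by (simp add: p_def)
  define q where "q = oth G p"
  note oq = oth_props[OF gd p]
  have q: "q < npts G" "q \<noteq> p" "crp G q = crp G p" "oth G q = p" using oq by (auto simp: q_def)
  note Ep = En_props[OF p] and Eq = En_props[OF q(1)] and Sp = S_props[OF p] and Sq = S_props[OF q(1)]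
  have ne1: "En G p \<noteq> En G q" using En_inj[OF p q(1)] q(2) by simp
  have ne2: "2 * p \<noteq> 2 * q" using q(2) by simp
  show ?thesis
  proof (cases "even e")
    case True
    then have ee: "e = 2 * p" using end_cases(2)[OF e] by (simp add: p_def)
    show ?thesis
      using bet_S[OF p, of C s] bet_E[OF p, of C s] bet_E[OF q(1), of C s] bet_S[OF q(1), of C s]
        q Ep Eq Sp Sq ne1 ne2 En_S S_En
      unfolding ee q_def[symmetric] by auto
  next
    case False
    then have ee: "e = En G p" using end_cases(3)[OF e] by (simp add: p_def)
    show ?thesis
      using bet_S[OF p, of C s] bet_E[OF p, of C s] bet_E[OF q(1), of C s] bet_S[OF q(1), of C s]
        q Ep Eq Sp Sq ne1 ne2 En_S S_En
      unfolding ee q_def[symmetric] by auto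
  qed
qed

lemma invol_bet: "invol (ends G) (bet G C s)"
  unfolding invol_def ends_def using bet_props by auto

lemma invol_alp: "invol (ends G) alp"
  unfolding invol_def ends_def alp_def by (auto simp: npts_def) presburger+

end


context
  fixes G :: gauss
  assumes gd: "gauss_diagram G" and pos: "ncr G > 0"
begin

lemma oth_ovr_und:
  assumes c: "c \<in> crossings G"
  shows "oth G (ovr G c) = und G c" "oth G (und G c) = ovr G c"
  using crp_eq[OF gd c] gd_inj(3)[OF gd c c] by (auto simp: oth_def)

lemma glued_of_bet:
  assumes e: "e < 2 * npts G"
  shows "glued G C s (e div 2) (bet G C s e div 2) \<or> glued G C s (bet G C s e div 2) (e div 2)"
proof -
  define p where "p = pt G e"
  have p: "p < npts G" using end_cases(1)[OF gd pos e] by (simp add: p_def)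
  define c where "c = crp G p"
  have c: "c \<in> crossings G" "ovr G c = p \<or> und G c = p" using crp_spec[OF gd p] by (auto simp: c_def)
  note ou = oth_ovr_und[OF c(1)]
  have ee: "e = 2 * p \<or> e = En G p" using end_cases(2,3)[OF gd pos e] by (auto simp: p_def)
  note bS = bet_S[OF gd pos p, of C s] and bE = bet_E[OF gd pos p, of C s]
  note Ep = En_props[OF gd pos p]
  have q: "oth G p < npts G" using oth_props[OF gd p] by simp
  note Eq = En_props[OF gd pos q]
  have md: "mode G C s c = 0 \<longleftrightarrow> c \<notin> C" "mode G C s c = 1 \<longleftrightarrow> c \<in> C \<and> oriented_smoothing G s c"
    by (auto simp: mode_def)
  from c(2) show ?thesis
  proof
    assume pc: "ovr G c = p"
    then have oq: "oth G p = und G c" using ou by simp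
    from ee show ?thesis
    proof
      assume "e = 2 * p"
      then show ?thesis using bS Eq Ep oq pc c(1) md unfolding c_def[symmetric]
        by (cases "mode G C s c = 0"; cases "mode G C s c = 1"; auto simp: glued_def Let_def; blast)
    next
      assume "e = En G p"
      then show ?thesis using bE Eq Ep oq pc c(1) md unfolding c_def[symmetric]
        by (cases "mode G C s c = 0"; cases "mode G C s c = 1"; auto simp: glued_def Let_def; blast)
    qed
  next
    assume pc: "und G c = p"
    then have oq: "oth G p = ovr G c" using ou by simp
    from ee show ?thesis
    proof
      assume "e = 2 * p"
      then show ?thesis using bS Eq Ep oq pc c(1) md unfolding c_def[symmetric]
        by (cases "mode G C s c = 0"; cases "mode G C s c = 1"; auto simp: glued_def Let_def; blast)
    next
      assume "e = En G p"
      then show ?thesis using bE Eq Ep oq pc c(1) md unfolding c_def[symmetric]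
        by (cases "mode G C s c = 0"; cases "mode G C s c = 1"; auto simp: glued_def Let_def; blast)
    qed
  qed
qed

lemma glued_bounds:
  assumes "glued G C s i j"
  shows "i < npts G" "j < npts G"
  using assms gd_bounds[OF gd] seg_in_lt[OF Npos[OF gd pos]]
  by (auto simp: glued_def Let_def split: if_splits)

lemma bet_of_glued:
  assumes gl: "glued G C s i j"
  shows "\<exists>e < 2 * npts G. e div 2 = i \<and> bet G C s e div 2 = j"
proof -
  obtain c where c: "c \<in> crossings G" and h: "(let ip = seg_in G (ovr G c); op = ovr G c; iq = seg_in G (und G c); oq = und G c in
      if c \<notin> C then (i, j) \<in> {(ip, op), (iq, oq)}
      else if oriented_smoothing G s c then (i, j) \<in> {(ip, oq), (iq, op)}
      else (i, j) \<in> {(ip, iq), (op, oq)})" using gl by (auto simp: glued_def)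
  note b = gd_bounds[OF gd c]
  note ou = oth_ovr_und[OF c]
  note ce = crp_eq[OF gd c]
  note E1 = En_props[OF gd pos b(1)] and E2 = En_props[OF gd pos b(2)]
  note S1 = S_props[OF gd pos b(1)] and S2 = S_props[OF gd pos b(2)]
  note bS1 = bet_S[OF gd pos b(1), of C s] and bS2 = bet_S[OF gd pos b(2), of C s]
  note bE1 = bet_E[OF gd pos b(1), of C s] and bE2 = bet_E[OF gd pos b(2), of C s]
  have md: "mode G C s c = (if c \<notin> C then 0 else if oriented_smoothing G s c then 1 else 2)"
    by (simp add: mode_def)
  show ?thesis
  proof (cases "c \<in> C")
    case False
    then have "(i, j) = (seg_in G (ovr G c), ovr G c) \<or> (i, j) = (seg_in G (und G c), und G c)"
      using h by (simp add: Let_def)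
    then show ?thesis
    proof
      assume "(i, j) = (seg_in G (ovr G c), ovr G c)"
      then show ?thesis using False E1 bE1 ce ou md by (intro exI[of _ "En G (ovr G c)"]) auto
    next
      assume "(i, j) = (seg_in G (und G c), und G c)"
      then show ?thesis using False E2 bE2 ce ou md by (intro exI[of _ "En G (und G c)"]) auto
    qed
  next
    case True
    show ?thesis
    proof (cases "oriented_smoothing G s c")
      case o: True
      then have "(i, j) = (seg_in G (ovr G c), und G c) \<or> (i, j) = (seg_in G (und G c), ovr G c)"
        using h True by (simp add: Let_def)
      then show ?thesis
      proof
        assume "(i, j) = (seg_in G (ovr G c), und G c)"
        then show ?thesis using True o E1 bE1 ce ou md by (intro exI[of _ "En G (ovr G c)"]) auto
      next
        assume "(i, j) = (seg_in G (und G c), ovr G c)"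
        then show ?thesis using True o E2 bE2 ce ou md by (intro exI[of _ "En G (und G c)"]) auto
      qed
    next
      case o: False
      then have "(i, j) = (seg_in G (ovr G c), seg_in G (und G c)) \<or> (i, j) = (ovr G c, und G c)"
        using h True by (simp add: Let_def)
      then show ?thesis
      proof
        assume "(i, j) = (seg_in G (ovr G c), seg_in G (und G c))"
        then show ?thesis using True o E1 E2 bE1 ce ou md by (intro exI[of _ "En G (ovr G c)"]) auto
      next
        assume "(i, j) = (ovr G c, und G c)"
        then show ?thesis using True o S1 bS1 ce ou md by (intro exI[of _ "2 * ovr G c"]) auto
      qed
    qed
  qed
qed

end


context
  fixes G :: gauss
  assumes gd: "gauss_diagram G" and pos: "ncr G > 0"
begin

abbreviation "Rs C s \<equiv> (\<lambda>i j. glued G C s i j \<or> glued G C s j i)"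

lemma alp_div: "alp e div 2 = e div 2"
  by (auto simp: alp_def elim!: evenE oddE)

lemma c1:
  assumes "(E2 (ends G) alp (bet G C s))\<^sup>*\<^sup>* e f"
  shows "(Rs C s)\<^sup>*\<^sup>* (e div 2) (f div 2)"
  using assms
proof (induction rule: rtranclp_induct)
  case base then show ?case by simp
next
  case (step w w')
  then have w: "w < 2 * npts G" and ww: "w' = alp w \<or> w' = bet G C s w" by (auto simp: E2_def ends_def)
  from ww show ?case
  proof
    assume "w' = alp w" then show ?thesis using step.IH alp_div by simp
  next
    assume "w' = bet G C s w"
    then have "Rs C s (w div 2) (w' div 2)" using glued_of_bet[OF gd pos w] by auto
    then show ?thesis using step.IH by (rule rtranclp.rtrancl_into_rtrancl[rotated])
  qed
qed

lemma c2:
  assumes e: "e < 2 * npts G" and f: "f < 2 * npts G" and d: "e div 2 = f div 2"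
  shows "(E2 (ends G) alp (bet G C s))\<^sup>*\<^sup>* e f"
proof (cases "e = f")
  case True then show ?thesis by simp
next
  case False
  then have "f = alp e" using d by (simp add: alp_def) presburger
  then have "E2 (ends G) alp (bet G C s) e f" using e f by (simp add: E2_def ends_def)
  then show ?thesis by auto
qed

lemma c4:
  assumes "(Rs C s)\<^sup>*\<^sup>* i j" and "i < npts G"
  shows "j < npts G"
  using assms by (induction rule: rtranclp_induct) (auto dest: glued_bounds[OF gd pos])

lemma c3:
  assumes "(Rs C s)\<^sup>*\<^sup>* i j" and i: "i < npts G"
  shows "(E2 (ends G) alp (bet G C s))\<^sup>*\<^sup>* (2 * i) (2 * j)"
  using assms(1)
proof (induction rule: rtranclp_induct)
  case base then show ?case by simp
next
  case (step j k)
  let ?E = "E2 (ends G) alp (bet G C s)"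
  have sE: "symp ?E" using E2_sym[OF invol_alp[OF gd pos] invol_bet[OF gd pos]] .
  have jk: "j < npts G" "k < npts G" using step.hyps(2) glued_bounds[OF gd pos] by auto
  have "?E\<^sup>*\<^sup>* (2 * j) (2 * k)"
  proof (cases "glued G C s j k")
    case True
    then obtain e where e: "e < 2 * npts G" "e div 2 = j" "bet G C s e div 2 = k"
      using bet_of_glued[OF gd pos] by blast
    have be: "bet G C s e < 2 * npts G" using bet_props[OF gd pos e(1)] by simp
    have "?E\<^sup>*\<^sup>* (2 * j) e" using c2[OF _ e(1)] jk e by simp
    moreover have "?E e (bet G C s e)" using e be by (simp add: E2_def ends_def)
    moreover have "?E\<^sup>*\<^sup>* (bet G C s e) (2 * k)" using c2[OF be] jk e by simp
    ultimately show ?thesis by (meson rtranclp.rtrancl_into_rtrancl rtranclp_trans)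
  next
    case False
    then have "glued G C s k j" using step.hyps(2) by simp
    then obtain e where e: "e < 2 * npts G" "e div 2 = k" "bet G C s e div 2 = j"
      using bet_of_glued[OF gd pos] by blast
    have be: "bet G C s e < 2 * npts G" using bet_props[OF gd pos e(1)] by simp
    have "?E\<^sup>*\<^sup>* (2 * j) (bet G C s e)" using c2[OF _ be] jk e by simp
    moreover have "?E (bet G C s e) e" using e be bet_props[OF gd pos e(1)] by (simp add: E2_def ends_def)
    moreover have "?E\<^sup>*\<^sup>* e (2 * k)" using c2[OF e(1)] jk e by simp
    ultimately show ?thesis by (meson rtranclp.rtrancl_into_rtrancl rtranclp_trans)
  qed
  then show ?case using step.IH by (rule rtranclp_trans[rotated])
qed

lemma ncomp_nc:
  "ncomp G C s = nc (ends G) (E2 (ends G) alp (bet G C s))"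
proof -
  let ?E = "E2 (ends G) alp (bet G C s)"
  let ?N = "npts G"
  define rY where "rY = {(i, j). i < ?N \<and> j < ?N \<and> (Rs C s)\<^sup>*\<^sup>* i j}"
  have q: "{..<?N} // {(i, j). same_component G C s i j} = {..<?N} // rY"
  proof -
    have "{(i, j). same_component G C s i j} `` {x} = rY `` {x}" if "x < ?N" for x
      using that c4 by (auto simp: rY_def same_component_def)
    then show ?thesis unfolding quotient_def by auto
  qed
  have sR: "symp (Rs C s)" by (auto simp: symp_def)
  have eY: "equiv {..<?N} rY" unfolding rY_def equiv_def refl_on_def sym_def trans_def
    using rtranclp_sym[OF sR] by (auto intro: rtranclp_trans)
  have img: "(\<lambda>e. e div 2) ` ends G = {..<?N}"
  proof
    show "(\<lambda>e. e div 2) ` ends G \<subseteq> {..<?N}" by (auto simp: ends_def)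
    show "{..<?N} \<subseteq> (\<lambda>e. e div 2) ` ends G"
    proof
      fix i assume "i \<in> {..<?N}"
      then have "2 * i \<in> ends G" "(2 * i) div 2 = i" by (auto simp: ends_def)
      then show "i \<in> (\<lambda>e. e div 2) ` ends G" by (metis image_eqI)
    qed
  qed
  have sE: "symp ?E" using E2_sym[OF invol_alp[OF gd pos] invol_bet[OF gd pos]] .
  have "card (ends G // rel (ends G) ?E) = card ({..<?N} // rY)"
  proof (rule quot_map_card[OF equiv_rel[OF sE] eY img])
    fix a b assume a: "a \<in> ends G" and b: "b \<in> ends G"
    show "(a, b) \<in> rel (ends G) ?E \<longleftrightarrow> (a div 2, b div 2) \<in> rY"
    proof
      assume "(a, b) \<in> rel (ends G) ?E"
      then show "(a div 2, b div 2) \<in> rY" using c1 a b by (auto simp: rel_def rY_def ends_def)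
    next
      assume "(a div 2, b div 2) \<in> rY"
      then have h: "?E\<^sup>*\<^sup>* (2 * (a div 2)) (2 * (b div 2))" using c3 by (auto simp: rY_def)
      have "?E\<^sup>*\<^sup>* a (2 * (a div 2))" using c2 a by (auto simp: ends_def)
      moreover have "?E\<^sup>*\<^sup>* (2 * (b div 2)) b" using c2 b by (auto simp: ends_def)
      ultimately show "(a, b) \<in> rel (ends G) ?E" using h a b by (auto simp: rel_def intro: rtranclp_trans)
    qed
  qed
  then show ?thesis using q pos by (simp add: ncomp_def nc_def)
qed

end


lemma bet_mode_eq:
  "mode G C s (crp G (pt G e)) = mode G C s' (crp G (pt G e)) \<Longrightarrow> bet G C s e = bet G C s' e"
  by (simp add: bet_def Let_def)

context
  fixes G :: gauss
  assumes gd: "gauss_diagram G" and pos: "ncr G > 0"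
begin

lemma crp_pt_bet:
  assumes e: "e < 2 * npts G"
  shows "crp G (pt G (bet G C s e)) = crp G (pt G e)"
proof -
  define p where "p = pt G e"
  have p: "p < npts G" using end_cases(1)[OF gd pos e] by (simp add: p_def)
  have q: "oth G p < npts G" "crp G (oth G p) = crp G p" using oth_props[OF gd p] by auto
  note Ep = En_props[OF gd pos p] and Eq = En_props[OF gd pos q(1)]
  note Sp = S_props[OF gd pos p] and Sq = S_props[OF gd pos q(1)]
  have "e = 2 * p \<or> e = En G p" using end_cases(2,3)[OF gd pos e] by (auto simp: p_def)
  then show ?thesis
    using bet_S[OF gd pos p, of C s] bet_E[OF gd pos p, of C s] Ep Eq Sp Sq q
    unfolding p_def[symmetric] by auto
qed

lemma crp_pt_path:
  assumes "(E2 (ends G) (bet G C s) (bet G C s'))\<^sup>*\<^sup>* e f"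
  shows "crp G (pt G f) = crp G (pt G e)"
  using assms
proof (induction rule: rtranclp_induct)
  case base then show ?case by simp
next
  case (step w w')
  then have "w < 2 * npts G" "w' = bet G C s w \<or> w' = bet G C s' w" by (auto simp: E2_def ends_def)
  then show ?case using step.IH crp_pt_bet by auto
qed

end


context
  fixes G :: gauss
  assumes gd: "gauss_diagram G" and pos: "ncr G > 0"
begin

lemma nbc_lower:
  "2 * ncr G \<le> nc (ends G) (E2 (ends G) (bet G C s) (bet G C s')) + card {c \<in> crossings G. mode G C s c \<noteq> mode G C s' c}"
proof -
  let ?X = "ends G" and ?b = "bet G C s" and ?c = "bet G C s'"
  let ?E = "E2 ?X ?b ?c"
  define D where "D = {c \<in> crossings G. mode G C s c \<noteq> mode G C s' c}"
  define A where "A = crossings G - D"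
  define f where "f c = 2 * ovr G c" for c
  define w where "w c = (if ?b (2 * ovr G c) = En G (ovr G c) then 2 * und G c else En G (ovr G c))" for c
  have sE: "symp ?E" using E2_sym[OF invol_bet[OF gd pos] invol_bet[OF gd pos]] .
  have finC: "finite (crossings G)" by (simp add: crossings_def)
  have DA: "D \<subseteq> crossings G" "A \<subseteq> crossings G" by (auto simp: D_def A_def)
  have finD: "finite D" using DA(1) finC by (rule finite_subset)
  have cc: "card (crossings G) = ncr G" by (simp add: crossings_def)
  have cA: "card A = ncr G - card D" unfolding A_def using card_Diff_subset[OF finD DA(1)] cc by simp
  have cD: "card D \<le> ncr G" using card_mono[OF finC DA(1)] cc by simp
  have bnd: "ovr G c < npts G" "und G c < npts G" if "c \<in> crossings G" for c using gd_bounds[OF gd that] by auto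
  have ptf: "crp G (pt G (f c)) = c" if "c \<in> crossings G" for c
    using S_props(2)[OF gd pos bnd(1)[OF that]] crp_eq[OF gd that] by (simp add: f_def)
  have ptw: "crp G (pt G (w c)) = c" if "c \<in> crossings G" for c
    using S_props(2)[OF gd pos bnd(2)[OF that]] En_props(3)[OF gd pos bnd(1)[OF that]] crp_eq[OF gd that]
    by (simp add: w_def)
  have fw: "f c \<noteq> w c" if "c \<in> crossings G" for c
    using gd_inj(3)[OF gd that that] S_En[OF gd pos] by (auto simp: f_def w_def)
  have injf: "inj_on f (crossings G)" by (rule inj_on_inverseI[where g = "\<lambda>e. crp G (pt G e)"]) (use ptf in auto)
  have injw: "inj_on w A" by (rule inj_on_inverseI[where g = "\<lambda>e. crp G (pt G e)"]) (use ptw DA in auto)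
  have disj: "f ` crossings G \<inter> w ` A = {}"
  proof (rule ccontr)
    assume "f ` crossings G \<inter> w ` A \<noteq> {}"
    then obtain c d where cd: "c \<in> crossings G" "d \<in> A" "f c = w d" by auto
    then have "c = d" using ptf[OF cd(1)] ptw[of d] DA by auto
    then show False using fw cd by auto
  qed
  define R where "R = f ` crossings G \<union> w ` A"
  have cR: "card R = ncr G + card A"
    unfolding R_def using card_Un_disjoint[OF _ _ disj] card_image[OF injf] card_image[OF injw] finC DA
    by (simp add: crossings_def finite_subset)
  have RX: "R \<subseteq> ?X"
    using bnd En_props(1)[OF gd pos] DA by (auto simp: R_def f_def w_def ends_def)
  have inv: "crp G (pt G y) = crp G (pt G x)" if "?E\<^sup>*\<^sup>* x y" for x y
    using crp_pt_path[OF gd pos that] .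
  have closed: "z = f c \<or> z = ?b (f c)" if c: "c \<in> A" and path: "?E\<^sup>*\<^sup>* (f c) z" for c z
    using path
  proof (induction rule: rtranclp_induct)
    case base then show ?case by simp
  next
    case (step z z')
    have cc: "c \<in> crossings G" using c DA by auto
    have zX: "z < 2 * npts G" and zz: "z' = ?b z \<or> z' = ?c z" using step.hyps(2) by (auto simp: E2_def ends_def)
    have "crp G (pt G z) = crp G (pt G (f c))" using inv[OF step.hyps(1)] .
    then have crz: "crp G (pt G z) = c" using ptf[OF cc] by simp
    have "mode G C s c = mode G C s' c" using c by (auto simp: A_def D_def)
    then have bb: "?c z = ?b z" using bet_mode_eq[of G C s z s'] crz by simp
    have fX: "f c < 2 * npts G" using bnd[OF cc] by (simp add: f_def)
    have inv2: "?b (?b (f c)) = f c" using bet_props[OF gd pos fX] by simp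
    from step.IH zz bb inv2 show ?case by auto
  qed
  have dis: "r1 = r2" if r: "r1 \<in> R" "r2 \<in> R" and path: "?E\<^sup>*\<^sup>* r1 r2" for r1 r2
  proof -
    have path': "?E\<^sup>*\<^sup>* r2 r1" using rtranclp_sym[OF sE path] .
    have nw: "\<not> ?E\<^sup>*\<^sup>* (f c) (w c)" if c: "c \<in> A" for c
    proof
      assume "?E\<^sup>*\<^sup>* (f c) (w c)"
      then have "w c = f c \<or> w c = ?b (f c)" using closed[OF c] by blast
      moreover have cc: "c \<in> crossings G" using c DA by auto
      ultimately show False using fw[OF cc] S_En[OF gd pos] by (auto simp: w_def f_def split: if_splits)
    qed
    have eq: "crp G (pt G r1) = crp G (pt G r2)" using inv[OF path] by simp
    show ?thesis
    proof (cases "r1 \<in> f ` crossings G")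
      case True
      then obtain c where c: "c \<in> crossings G" "r1 = f c" by auto
      show ?thesis
      proof (cases "r2 \<in> f ` crossings G")
        case True
        then obtain d where d: "d \<in> crossings G" "r2 = f d" by auto
        then show ?thesis using eq c ptf by auto
      next
        case False
        then obtain d where d: "d \<in> A" "r2 = w d" using r by (auto simp: R_def)
        then have "d = c" using eq c ptf ptw DA by auto
        then show ?thesis using nw[OF d(1)] path c d by auto
      qed
    next
      case False
      then obtain c where c: "c \<in> A" "r1 = w c" using r by (auto simp: R_def)
      show ?thesis
      proof (cases "r2 \<in> f ` crossings G")
        case True
        then obtain d where d: "d \<in> crossings G" "r2 = f d" by auto
        then have "d = c" using eq c ptf ptw DA by auto
        then show ?thesis using nw[OF c(1)] path' c d by auto
      next
        case False
        then obtain d where d: "d \<in> A" "r2 = w d" using r by (auto simp: R_def)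
        have "c \<in> crossings G" "d \<in> crossings G" using c d DA by auto
        then have "c = d" using eq c d ptw[of c] ptw[of d] by simp
        then show ?thesis using c d by simp
      qed
    qed
  qed
  have "card R \<le> nc ?X ?E"
    by (rule nc_ge[OF sE RX]) (use dis in \<open>auto simp: ends_def\<close>)
  then show ?thesis using cR cA cD by (simp add: D_def)
qed

end


context
  fixes G :: gauss
  assumes gd: "gauss_diagram G" and pos: "ncr G > 0"
begin

lemma n3_upper:
  assumes CC: "C \<subseteq> crossings G"
  shows "nc (ends G) (E3 (ends G) alp (bet G C s) (bet G C s')) \<le> 1 + card {c \<in> C. mode G C s c = mode G C s' c}"
proof -
  let ?X = "ends G" and ?b = "bet G C s" and ?c = "bet G C s'"
  let ?E = "E3 ?X alp ?b ?c"
  define Ag where "Ag = {c \<in> C. mode G C s c = mode G C s' c}"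
  define F where "F = (\<lambda>c. (En G (ovr G c), 2 * ovr G c)) ` Ag"
  define H where "H = addF ?E F"
  have finC: "finite (crossings G)" by (simp add: crossings_def)
  have finAg: "finite Ag" using CC finC by (auto simp: Ag_def intro: finite_subset)
  have bnd: "ovr G c < npts G" "und G c < npts G" if "c \<in> crossings G" for c using gd_bounds[OF gd that] by auto
  have FX: "F \<subseteq> ?X \<times> ?X" using bnd En_props(1)[OF gd pos] CC by (auto simp: F_def Ag_def ends_def)
  have sE: "symp ?E" using E3_sym[OF invol_alp[OF gd pos] invol_bet[OF gd pos] invol_bet[OF gd pos]] .
  have sH: "symp H" using sE unfolding H_def symp_def addF_def by blast
  have cF: "card F \<le> card Ag" unfolding F_def by (rule card_image_le[OF finAg])
  have h1: "nc ?X ?E \<le> nc ?X H + card F"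
    unfolding H_def by (rule nc_addF[OF _ sE _ FX]) (auto simp: ends_def F_def finAg)
  have Hs: "H\<^sup>*\<^sup>* v u" if "H\<^sup>*\<^sup>* u v" for u v using rtranclp_sym[OF sH that] .
  have Eb: "H\<^sup>*\<^sup>* u (?b u)" "H\<^sup>*\<^sup>* u (?c u)" "H\<^sup>*\<^sup>* u (alp u)" if "u < 2 * npts G" for u
    using that bet_props[OF gd pos that, of C s] bet_props[OF gd pos that, of C s'] invol_alp[OF gd pos]
    by (auto simp: H_def addF_def E3_def ends_def invol_def intro!: r_into_rtranclp)
  have Pedge: "H\<^sup>*\<^sup>* (En G p) (2 * p)" if p: "p < npts G" for p
  proof -
    define c where "c = crp G p"
    have c: "c \<in> crossings G" "ovr G c = p \<or> und G c = p" using crp_spec[OF gd p] by (auto simp: c_def)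
    define q where "q = oth G p"
    have q: "q < npts G" "crp G q = c" "oth G q = p" using oth_props[OF gd p] by (auto simp: q_def c_def)
    note bSp = bet_S[OF gd pos p] and bEp = bet_E[OF gd pos p] and bSq = bet_S[OF gd pos q(1)] and bEq = bet_E[OF gd pos q(1)]
    have Ep: "En G p < 2 * npts G" "2 * p < 2 * npts G" using En_props[OF gd pos p] p by auto
    have Eq: "En G q < 2 * npts G" "2 * q < 2 * npts G" using En_props[OF gd pos q(1)] q by auto
    show ?thesis
    proof (cases "mode G C s c = 0")
      case True
      then have "?b (En G p) = 2 * p" using bEp[of C s] by (simp add: c_def)
      then show ?thesis using Eb(1)[OF Ep(1)] by simp
    next
      case m0: False
      then have cC: "c \<in> C" by (auto simp: mode_def split: if_splits)
      then have m0': "mode G C s' c \<noteq> 0" by (auto simp: mode_def)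
      have m12: "mode G C s c \<in> {1, 2}" "mode G C s' c \<in> {1, 2}" using cC by (auto simp: mode_def)
      show ?thesis
      proof (cases "mode G C s c = mode G C s' c")
        case True
        then have cAg: "c \<in> Ag" using cC by (simp add: Ag_def)
        show ?thesis
        proof (cases "ovr G c = p")
          case True
          then have "(En G p, 2 * p) \<in> F" using cAg by (force simp: F_def)
          then show ?thesis by (auto simp: H_def addF_def intro!: r_into_rtranclp)
        next
          case False
          then have "und G c = p" using c by simp
          then have "q = ovr G c" using oth_ovr_und[OF gd pos c(1)] by (simp add: q_def)
          then have Fq: "H (En G q) (2 * q)" "H (2 * q) (En G q)" using cAg by (force simp: F_def H_def addF_def)+
          show ?thesis
          proof (cases "mode G C s c = 1")
            case True
            then have "?b (En G p) = 2 * q" "?b (2 * p) = En G q"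
              using bEp[of C s] bSp[of C s] by (simp_all add: c_def q_def)
            then have "H\<^sup>*\<^sup>* (En G p) (2 * q)" "H\<^sup>*\<^sup>* (En G q) (2 * p)"
              using Eb(1)[OF Ep(1)] Eb(1)[OF Ep(2)] Hs by metis+
            then show ?thesis using Fq by (meson r_into_rtranclp rtranclp_trans)
          next
            case False
            then have "mode G C s c = 2" using m12 by simp
            then have "?b (En G p) = En G q" "?b (2 * p) = 2 * q"
              using bEp[of C s] bSp[of C s] by (simp_all add: c_def q_def)
            then have "H\<^sup>*\<^sup>* (En G p) (En G q)" "H\<^sup>*\<^sup>* (2 * q) (2 * p)"
              using Eb(1)[OF Ep(1)] Eb(1)[OF Ep(2)] Hs by metis+
            then show ?thesis using Fq by (meson r_into_rtranclp rtranclp_trans)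
          qed
        qed
      next
        case False
        show ?thesis
        proof (cases "mode G C s c = 1")
          case True
          then have m2: "mode G C s' c = 2" using m12 False by auto
          have "?b (En G p) = 2 * q" using True bEp[of C s] by (simp add: c_def q_def)
          moreover have "?c (2 * q) = 2 * p" using m2 bSq[of C s'] q by simp
          ultimately show ?thesis using Eb(1)[OF Ep(1)] Eb(2)[OF Eq(2)] by (metis rtranclp_trans)
        next
          case m1: False
          then have m2: "mode G C s c = 2" "mode G C s' c = 1" using m12 False by auto
          have "?b (En G p) = En G q" using m2 bEp[of C s] by (simp add: c_def q_def)
          moreover have "?c (En G q) = 2 * p" using m2 bEq[of C s'] q by simp
          ultimately show ?thesis using Eb(1)[OF Ep(1)] Eb(2)[OF Eq(1)] by (metis rtranclp_trans)
        qed
      qed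
    qed
  qed
  have chain: "H\<^sup>*\<^sup>* (2 * i) 0" if "i < npts G" for i
    using that
  proof (induction i)
    case 0 then show ?case by simp
  next
    case (Suc i)
    have "En G (Suc i) = 2 * i + 1" using seg_in_val[OF Suc.prems] by (simp add: En_def)
    then have a: "H\<^sup>*\<^sup>* (2 * Suc i) (2 * i + 1)" using Pedge[OF Suc.prems] Hs by metis
    have "alp (2 * i + 1) = 2 * i" by (simp add: alp_def)
    then have "H\<^sup>*\<^sup>* (2 * i + 1) (2 * i)" using Eb(3)[of "2 * i + 1"] Suc.prems by simp
    then show ?case using a Suc.IH Suc.prems by (meson Suc_lessD rtranclp_trans)
  qed
  have all: "H\<^sup>*\<^sup>* e 0" if "e \<in> ?X" for e
  proof (cases "even e")
    case True
    then have "e = 2 * (e div 2)" "e div 2 < npts G" using that by (auto simp: ends_def)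
    then show ?thesis using chain by metis
  next
    case False
    then have "alp e = 2 * (e div 2)" "e div 2 < npts G" using that by (auto simp: ends_def alp_def elim!: oddE)
    then show ?thesis using chain Eb(3)[of e] that by (metis rtranclp_trans ends_def lessThan_iff)
  qed
  have "nc ?X H \<le> 1" by (rule nc_le_one[OF sH, of 0]) (use all Npos[OF gd pos] in \<open>auto simp: ends_def\<close>)
  then show ?thesis using h1 cF by (simp add: Ag_def)
qed

end


lemma key_comb:
  assumes gd: "gauss_diagram G" and pos: "ncr G > 0" and CC: "C \<subseteq> crossings G"
  shows "ncomp G C s + ncomp G C s' + card {c \<in> C. mode G C s c \<noteq> mode G C s' c} \<le> 2 + 2 * card C"
proof -
  let ?X = "ends G"
  have fin: "finite ?X" by (simp add: ends_def)
  have cX: "card ?X = 4 * ncr G" by (simp add: ends_def npts_def)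
  have eu: "2 * (nc ?X (E2 ?X alp (bet G C s)) + nc ?X (E2 ?X alp (bet G C s')) + nc ?X (E2 ?X (bet G C s) (bet G C s')))
      \<le> card ?X + 4 * nc ?X (E3 ?X alp (bet G C s) (bet G C s'))"
    by (rule euler_ineq[OF fin invol_alp[OF gd pos] invol_bet[OF gd pos] invol_bet[OF gd pos]])
  have finC: "finite C" using CC by (auto simp: crossings_def intro: finite_subset)
  have D: "{c \<in> crossings G. mode G C s c \<noteq> mode G C s' c} = {c \<in> C. mode G C s c \<noteq> mode G C s' c}"
    using CC by (auto simp: mode_def)
  define j where "j = card {c \<in> C. mode G C s c \<noteq> mode G C s' c}"
  define a where "a = card {c \<in> C. mode G C s c = mode G C s' c}"
  have ja: "j + a = card C"
  proof -
    have "{c \<in> C. mode G C s c \<noteq> mode G C s' c} \<inter> {c \<in> C. mode G C s c = mode G C s' c} = {}" by auto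
    moreover have "{c \<in> C. mode G C s c \<noteq> mode G C s' c} \<union> {c \<in> C. mode G C s c = mode G C s' c} = C" by auto
    ultimately show ?thesis unfolding j_def a_def using finC
      by (metis (no_types, lifting) card_Un_disjoint finite_Un)
  qed
  have lb: "2 * ncr G \<le> nc ?X (E2 ?X (bet G C s) (bet G C s')) + j"
    using nbc_lower[OF gd pos, of C s s'] D by (simp add: j_def)
  have ub: "nc ?X (E3 ?X alp (bet G C s) (bet G C s')) \<le> 1 + a"
    using n3_upper[OF gd pos CC, of s s'] by (simp add: a_def)
  have "ncomp G C s = nc ?X (E2 ?X alp (bet G C s))" by (rule ncomp_nc[OF gd pos])
  moreover have "ncomp G C s' = nc ?X (E2 ?X alp (bet G C s'))" by (rule ncomp_nc[OF gd pos])
  ultimately show ?thesis using eu cX lb ub ja by (simp add: j_def[symmetric])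
qed

lemma fls_intpow_times_nth: "fls_nth (fls_X_intpow i * (g :: int fls)) n = fls_nth g (n - i)"
  by (simp add: fls_X_intpow_times_conv_shift)

lemma delta_pow_support:
  "fls_nth ((- (fls_X ^ 2) - fls_X_inv ^ 2 :: int fls) ^ N) d \<noteq> 0 \<Longrightarrow> - 2 * int N \<le> d \<and> d \<le> 2 * int N"
proof (induction N arbitrary: d)
  case 0 then show ?case by (simp split: if_splits)
next
  case (Suc N)
  let ?g = "(- (fls_X ^ 2) - fls_X_inv ^ 2 :: int fls) ^ N"
  have "(- (fls_X ^ 2) - fls_X_inv ^ 2 :: int fls) ^ Suc N = - (fls_X ^ 2 * ?g) - fls_X_inv ^ 2 * ?g"
    by (simp add: algebra_simps)
  then have "fls_nth ((- (fls_X ^ 2) - fls_X_inv ^ 2 :: int fls) ^ Suc N) d = - fls_nth ?g (d - 2) - fls_nth ?g (d + 2)"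
    by (simp add: fls_X_power_times_conv_shift fls_X_inv_power_times_conv_shift)
  then have "fls_nth ?g (d - 2) \<noteq> 0 \<or> fls_nth ?g (d + 2) \<noteq> 0" using Suc.prems by auto
  then show ?case using Suc.IH by force
qed


lemma ncomp_pos: "gauss_diagram G \<Longrightarrow> ncomp G C s \<ge> 1"
proof (cases "ncr G = 0")
  case True then show ?thesis by (simp add: ncomp_def)
next
  case False
  then have "npts G > 0" by (simp add: npts_def)
  then have "{..<npts G} \<noteq> {}" by auto
  then have ne: "{..<npts G} // {(i, j). same_component G C s i j} \<noteq> {}" by simp
  have "finite ({..<npts G} // {(i, j). same_component G C s i j})"
    unfolding quotient_def by simp
  then show ?thesis using ne False by (simp add: ncomp_def Suc_le_eq card_gt_0_iff)
qed

lemma states_comb: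
  assumes gd: "gauss_diagram G" and CC: "C \<subseteq> crossings G"
    and s1: "s1 \<in> C \<rightarrow>\<^sub>E {0, 1}" and s2: "s2 \<in> C \<rightarrow>\<^sub>E {0, 1}"
  shows "ncomp G C s1 + ncomp G C s2 + card {c \<in> C. s1 c \<noteq> s2 c} \<le> 2 + 2 * card C"
proof (cases "ncr G = 0")
  case True
  then have "C = {}" using CC by (simp add: crossings_def)
  then show ?thesis using True by (simp add: ncomp_def)
next
  case False
  have "{c \<in> C. mode G C s1 c \<noteq> mode G C s2 c} = {c \<in> C. s1 c \<noteq> s2 c}"
  proof -
    have "mode G C s1 c \<noteq> mode G C s2 c \<longleftrightarrow> s1 c \<noteq> s2 c" if c: "c \<in> C" for c
    proof -
      have "s1 c \<in> {0, 1}" "s2 c \<in> {0, 1}" using s1 s2 c by auto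
      then show ?thesis using c by (auto simp: mode_def oriented_smoothing_def)
    qed
    then show ?thesis by auto
  qed
  then show ?thesis using key_comb[OF gd _ CC, of s1 s2] False by simp
qed

lemma e_diff:
  fixes s1 s2 :: "nat \<Rightarrow> nat"
  assumes finC: "finite C" and s1: "s1 \<in> C \<rightarrow>\<^sub>E {0, 1}" and s2: "s2 \<in> C \<rightarrow>\<^sub>E {0, 1}"
  shows "(int (card {c \<in> C. s1 c = 0}) - int (card {c \<in> C. s1 c = 1}))
       - (int (card {c \<in> C. s2 c = 0}) - int (card {c \<in> C. s2 c = 1})) \<le> 2 * int (card {c \<in> C. s1 c \<noteq> s2 c})"
proof -
  have split: "card {c \<in> C. s c = 0} + card {c \<in> C. s c = 1} = card C" if s: "s \<in> C \<rightarrow>\<^sub>E {0, 1}" for s :: "nat \<Rightarrow> nat"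
  proof -
    have "{c \<in> C. s c = 0} \<union> {c \<in> C. s c = 1} = C" using s by auto
    moreover have "{c \<in> C. s c = 0} \<inter> {c \<in> C. s c = 1} = {}" by auto
    ultimately show ?thesis using finC by (metis (no_types, lifting) card_Un_disjoint finite_Un)
  qed
  have "{c \<in> C. s1 c = 0} \<subseteq> {c \<in> C. s2 c = 0} \<union> {c \<in> C. s1 c \<noteq> s2 c}" by auto
  then have "card {c \<in> C. s1 c = 0} \<le> card ({c \<in> C. s2 c = 0} \<union> {c \<in> C. s1 c \<noteq> s2 c})"
    using finC by (intro card_mono) auto
  also have "\<dots> \<le> card {c \<in> C. s2 c = 0} + card {c \<in> C. s1 c \<noteq> s2 c}" by (rule card_Un_le)
  finally have le: "card {c \<in> C. s1 c = 0} \<le> card {c \<in> C. s2 c = 0} + card {c \<in> C. s1 c \<noteq> s2 c}" .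
  show ?thesis using split[OF s1] split[OF s2] le by linarith
qed

lemma fls_shift_one_times: "fls_shift m (1 :: int fls) * g = fls_shift m g"
  using fls_X_intpow_times_conv_shift(1)[of "- m" g] by simp

lemma fls_shift_one_times_nth: "fls_nth (fls_shift m 1 * (g :: int fls)) d = fls_nth g (d + m)"
  using fls_intpow_times_nth[of "- m" g d] by simp

definition eS :: "nat set \<Rightarrow> (nat \<Rightarrow> nat) \<Rightarrow> int" where
  "eS C s = int (card {c \<in> C. s c = 0}) - int (card {c \<in> C. s c = 1})"

lemma bracket_support:
  assumes "fls_nth (bracket_n G n) d \<noteq> 0"
  shows "\<exists>s \<in> Cn G n \<rightarrow>\<^sub>E {0::nat, 1}. eS (Cn G n) s - 2 * int (ncomp G (Cn G n) s - 1) \<le> d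
            \<and> d \<le> eS (Cn G n) s + 2 * int (ncomp G (Cn G n) s - 1)"
proof (rule ccontr)
  assume h: "\<not> ?thesis"
  have "fls_nth (bracket_n G n) d = 0"
    unfolding bracket_n_def fls_nth_sum fls_intpow_times_nth
  proof (rule sum.neutral, rule ballI)
    fix s :: "nat \<Rightarrow> nat" assume s: "s \<in> Cn G n \<rightarrow>\<^sub>E {0, 1}"
    have "fls_nth ((- (fls_X ^ 2) - fls_X_inv ^ 2 :: int fls) ^ (ncomp G (Cn G n) s - 1)) (d - eS (Cn G n) s) = 0"
      using delta_pow_support[of "ncomp G (Cn G n) s - 1" "d - eS (Cn G n) s"] h s by force
    then show "fls_nth ((- (fls_X ^ 2) - fls_X_inv ^ 2 :: int fls) ^ (ncomp G (Cn G n) s - 1))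
       (d - (int (card {c \<in> Cn G n. s c = 0}) - int (card {c \<in> Cn G n. s c = 1}))) = 0"
      by (simp add: eS_def)
  qed
  then show False using assms by simp
qed

lemma jones_support:
  assumes "fls_nth (jones_n_A G n) d \<noteq> 0"
  shows "fls_nth (bracket_n G n) (d + 3 * writhe G) \<noteq> 0"
proof -
  have "fls_nth (jones_n_A G n) d = (-1) ^ nat \<bar>writhe G\<bar> * fls_nth (bracket_n G n) (d + 3 * writhe G)"
  proof (cases "even (nat \<bar>writhe G\<bar>)")
    case True then show ?thesis by (simp add: jones_n_A_def fls_shift_one_times_nth mult.assoc)
  next
    case False then show ?thesis by (simp add: jones_n_A_def fls_shift_one_times_nth mult.assoc)
  qed
  then show ?thesis using assms by auto
qed


theorem proposition4p2:
  fixes K :: gauss and n :: nat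
  assumes "gauss_diagram K"
  shows "real (card (Cn K n)) \<ge> t_span (jones_n_A K n)"
proof -
  note gd = assms
  define C where "C = Cn K n"
  define k where "k = card C"
  define J where "J = jones_n_A K n"
  have CC: "C \<subseteq> crossings K" by (auto simp: C_def Cn_def)
  have finC: "finite C" using CC by (auto simp: crossings_def intro: finite_subset)
  have pair: "d1 - d2 \<le> 4 * int k" if d1: "fls_nth J d1 \<noteq> 0" and d2: "fls_nth J d2 \<noteq> 0" for d1 d2
  proof -
    obtain s1 where s1: "s1 \<in> C \<rightarrow>\<^sub>E {0, 1}"
      and b1: "d1 + 3 * writhe K \<le> eS C s1 + 2 * int (ncomp K C s1 - 1)"
      using bracket_support[OF jones_support[OF d1[unfolded J_def]]] by (auto simp: C_def)
    obtain s2 where s2: "s2 \<in> C \<rightarrow>\<^sub>E {0, 1}"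
      and b2: "eS C s2 - 2 * int (ncomp K C s2 - 1) \<le> d2 + 3 * writhe K"
      using bracket_support[OF jones_support[OF d2[unfolded J_def]]] by (auto simp: C_def)
    have n1: "ncomp K C s1 \<ge> 1" and n2: "ncomp K C s2 \<ge> 1" using ncomp_pos[OF gd] by auto
    have sc: "ncomp K C s1 + ncomp K C s2 + card {c \<in> C. s1 c \<noteq> s2 c} \<le> 2 + 2 * card C"
      by (rule states_comb[OF gd CC s1 s2])
    have ed: "eS C s1 - eS C s2 \<le> 2 * int (card {c \<in> C. s1 c \<noteq> s2 c})"
      using e_diff[OF finC s1 s2] by (simp add: eS_def)
    have i1: "int (ncomp K C s1 - 1) = int (ncomp K C s1) - 1" using n1 by simp
    have i2: "int (ncomp K C s2 - 1) = int (ncomp K C s2) - 1" using n2 by simp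
    have sc': "int (ncomp K C s1) + int (ncomp K C s2) + int (card {c \<in> C. s1 c \<noteq> s2 c}) \<le> 2 + 2 * int k"
      using sc by (simp add: k_def)
    show ?thesis using b1 b2 ed i1 i2 sc' by linarith
  qed
  show ?thesis
  proof (cases "J = 0")
    case True
    then show ?thesis by (simp add: J_def[symmetric] t_span_def)
  next
    case False
    then obtain d0 where d0: "fls_nth J d0 \<noteq> 0" using fls_nonzero_nth by blast
    define Sp where "Sp = {d. fls_nth J d \<noteq> 0}"
    have Sp_sub: "Sp \<subseteq> {d0 - 4 * int k .. d0 + 4 * int k}"
      using pair d0 by (force simp: Sp_def)
    have finSp: "finite Sp" using finite_subset[OF Sp_sub] by simp
    have T: "t_exponents J = (\<lambda>e. - real_of_int e / 4) ` Sp" by (auto simp: t_exponents_def Sp_def)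
    have finT: "finite (t_exponents J)" using T finSp by simp
    have neT: "t_exponents J \<noteq> {}" using T d0 by (auto simp: Sp_def)
    obtain a where a: "a \<in> Sp" "Max (t_exponents J) = - real_of_int a / 4"
      using Max_in[OF finT neT] T by auto
    obtain b where b: "b \<in> Sp" "Min (t_exponents J) = - real_of_int b / 4"
      using Min_in[OF finT neT] T by auto
    have "b - a \<le> 4 * int k" using pair a b by (simp add: Sp_def)
    then have "real_of_int (b - a) \<le> real_of_int (4 * int k)" by linarith
    then have "Max (t_exponents J) - Min (t_exponents J) \<le> real k" using a b by simp
    then show ?thesis using False by (simp add: t_span_def J_def[symmetric] k_def C_def)
  qed
qed


thm_deps proposition4p2

end
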